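(* In the stochastic approximation setting described in the context (with $\mu>0$ chosen so that $\alpha_2>0$), for all $k\ge0$, $$\mathbb{E}[M(x_{k+1}-x^* )\mid\mathcal F_k]\le(1-2\alpha_2\epsilon_k+\alpha_3\epsilon_k^2)M(x_k-x^* )+\frac{\alpha_4(A+2B\|x^*\|_c^2)}{2(1+\mu/\ell_{cs}^2)}\epsilon_k^2.$$
   Context: Let $\|\cdot\|_c,\|\cdot\|_e$ be arbitrary norms on $\mathbb{R}^d$. Let $\mathcal H:\mathbb{R}^d\to\mathbb{R}^d$ satisfy $\|\mathcal H(x)-\mathcal H(y)\|_c\le\gamma\|x-y\|_c$ for all $x,y$, for some $\gamma\in(0,1)$, and let $x^*$ be its unique fixed point. Fix a deterministic $x_0\in\mathbb{R}^d$ and define $x_{k+1}=x_k+\epsilon_k(\mathcal H(x_k)-x_k+w_k)$, where $\{w_k\}$ are random vectors such that, letting $\mathcal F_k$ be the $\sigma$-algebra generated by $x_0,w_0,\dots,x_{k-1},w_{k-1},x_k$, for all $k\ge0$: $\mathbb{E}[w_k\mid\mathcal F_k]=0$ and $\mathbb{E}[\|w_k\|_e^2\mid\mathcal F_k]\le A+B\|x_k\|_e^2$ for constants $A,B>0$. The stepsizes $\{\epsilon_k\}$ are positive and non-increasing. A convex differentiable $h$ is $L$-smooth w.r.t. a norm $\|\cdot\|$ if $h(y)\le h(x)+\langle\nabla h(x),y-x\rangle+\frac L2\|x-y\|^2$ for all $x,y$. Let $\|\cdot\|_s$ be a norm such that $g(x)=\frac12\|x\|_s^2$ is $L$-smooth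 w.r.t. $\|\cdot\|_s$, and let $\ell_{cs},\ell_{es}\in(0,1]$, $u_{cs},u_{es}\in[1,\infty)$ satisfy $\ell_{cs}\|x\|_c\le\|x\|_s\le u_{cs}\|x\|_c$ and $\ell_{es}\|x\|_e\le\|x\|_s\le u_{es}\|x\|_e$ for all $x$. Let $f(x)=\frac12\|x\|_c^2$ and, for $\mu>0$, $M(x)=\min_{u\in\mathbb{R}^d}\{f(u)+\frac1\mu g(x-u)\}$. Define $\alpha_1=\frac{1+\mu/\ell_{cs}^2}{1+\mu/u_{cs}^2}$, $\alpha_2=1-\gamma\alpha_1^{1/2}$, $\alpha_3=\frac{4u_{cs}^2u_{es}^2(B+2)L(\ell_{cs}^2+\mu)}{\mu\ell_{cs}^2\ell_{es}^2}$, $\alpha_4=\frac{\alpha_3}{2(B+2)}$; $\mu$ is chosen so that $\alpha_2>0$. *)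

theory Defs
  imports "HOL-Analysis.Analysis" "HOL-Probability.Probability"
begin

definition is_norm :: "('a::real_vector \<Rightarrow> real) \<Rightarrow> bool" where
  "is_norm N \<longleftrightarrow> (\<forall>x. N x = 0 \<longleftrightarrow> x = 0) \<and> (\<forall>a x. N (a *\<^sub>R x) = \<bar>a\<bar> * N x)
     \<and> (\<forall>x y. N (x + y) \<le> N x + N y)"

definition L_smooth :: "('a::euclidean_space \<Rightarrow> real) \<Rightarrow> ('a \<Rightarrow> real) \<Rightarrow> real \<Rightarrow> bool" where
  "L_smooth h N L \<longleftrightarrow> convex_on UNIV h \<and>
     (\<exists>grad. (\<forall>x. (h has_derivative (\<lambda>v. grad x \<bullet> v)) (at x)) \<and>
        (\<forall>x y. h y \<le> h x + grad x \<bullet> (y - x) + L / 2 * (N (x - y))\<^sup>2))"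

definition moreau :: "('a \<Rightarrow> real) \<Rightarrow> ('a \<Rightarrow> real) \<Rightarrow> real \<Rightarrow> 'a::ab_group_add \<Rightarrow> real" where
  "moreau Nc Ns \<mu> x = (INF u. (1/2) * (Nc u)\<^sup>2 + (1/\<mu>) * ((1/2) * (Ns (x - u))\<^sup>2))"

definition hist :: "'w measure \<Rightarrow> (nat \<Rightarrow> 'w \<Rightarrow> 'b::topological_space) \<Rightarrow> (nat \<Rightarrow> 'w \<Rightarrow> 'b) \<Rightarrow> nat \<Rightarrow> 'w measure" where
  "hist M x w k = sigma (space M)
     ({x i -` B \<inter> space M | i B. i \<le> k \<and> B \<in> sets borel} \<union>
      {w i -` B \<inter> space M | i B. i < k \<and> B \<in> sets borel})"

end

theory Submission
  imports Defs
begin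

lemma isn:
  assumes "is_norm N"
  shows isn_0: "N 0 = 0" and isn_scale: "N (a *\<^sub>R x) = \<bar>a\<bar> * N x"
    and isn_tri: "N (x + y) \<le> N x + N y" and isn_zero: "N x = 0 \<longleftrightarrow> x = 0"
proof -
  show "N (a *\<^sub>R x) = \<bar>a\<bar> * N x" "N (x + y) \<le> N x + N y" "N x = 0 \<longleftrightarrow> x = 0"
    using assms unfolding is_norm_def by auto
  then show "N 0 = 0" using assms unfolding is_norm_def by auto
qed

lemma isn_minus: assumes "is_norm N" shows "N (- x) = N x"
  using isn_scale[OF assms, of "-1" x] by simp

lemma isn_nonneg: assumes "is_norm N" shows "N x \<ge> 0"
proof -
  have "N (x + - x) \<le> N x + N (-x)" by (rule isn_tri[OF assms])
  then show ?thesis using isn_minus[OF assms] isn_0[OF assms] by simp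
qed

lemma isn_commute: assumes "is_norm N" shows "N (x - y) = N (y - x)"
  using isn_minus[OF assms, of "x - y"] by simp

lemma isn_diff: assumes "is_norm N" shows "N (x - y) \<le> N x + N y"
  using isn_tri[OF assms, of x "-y"] isn_minus[OF assms] by simp

lemma isn_convex: assumes "is_norm N" shows "convex_on UNIV N"
proof (rule convex_onI)
  fix t :: real and x y :: 'a assume t: "0 < t" "t < 1"
  have "N ((1 - t) *\<^sub>R x + t *\<^sub>R y) \<le> N ((1 - t) *\<^sub>R x) + N (t *\<^sub>R y)" by (rule isn_tri[OF assms])
  also have "\<dots> = (1 - t) * N x + t * N y" using t by (simp add: isn_scale[OF assms])
  finally show "N ((1 - t) *\<^sub>R x + t *\<^sub>R y) \<le> (1 - t) * N x + t * N y" .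
qed (simp)

lemma isn_cont: fixes N :: "'a::euclidean_space \<Rightarrow> real"
  assumes "is_norm N" shows "continuous_on UNIV N"
  by (rule convex_on_continuous[OF open_UNIV isn_convex[OF assms]])

lemma isn_lower: fixes N :: "'a::euclidean_space \<Rightarrow> real"
  assumes "is_norm N" shows "\<exists>m>0. \<forall>x. m * norm x \<le> N x"
proof -
  have "compact (sphere (0::'a) 1)" by simp
  moreover have "sphere (0::'a) 1 \<noteq> {}" by simp
  moreover have "continuous_on (sphere 0 1) N"
    using isn_cont[OF assms] continuous_on_subset by blast
  ultimately have "\<exists>z\<in>sphere 0 1. \<forall>y\<in>sphere 0 1. N z \<le> N y"
    by (rule continuous_attains_inf)
  then obtain z where z: "z \<in> sphere 0 1" "\<And>y. y \<in> sphere 0 1 \<Longrightarrow> N z \<le> N y"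
    by blast
  have "z \<noteq> 0" using z by auto
  then have mpos: "N z > 0" using isn_zero[OF assms, of z] isn_nonneg[OF assms, of z] by auto
  have "N z * norm x \<le> N x" for x
  proof (cases "x = 0")
    case True then show ?thesis by (simp add: isn_0[OF assms])
  next
    case False
    have "N z \<le> N ((1 / norm x) *\<^sub>R x)" using z(2)[of "(1 / norm x) *\<^sub>R x"] False by simp
    also have "\<dots> = N x / norm x" using isn_scale[OF assms] by simp
    finally show ?thesis using False by (simp add: field_simps)
  qed
  then show ?thesis using mpos by blast
qed


lemma sq_convex_aux:
  fixes t p q z :: real
  assumes "0 \<le> t" "t \<le> 1" "0 \<le> z" "z \<le> (1 - t) * p + t * q"
  shows "z\<^sup>2 \<le> (1 - t) * p\<^sup>2 + t * q\<^sup>2"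
proof -
  have "z\<^sup>2 \<le> ((1 - t) * p + t * q)\<^sup>2" using assms by (intro power_mono) auto
  also have "\<dots> = (1 - t) * p\<^sup>2 + t * q\<^sup>2 - (1 - t) * t * (p - q)\<^sup>2"
    by (simp add: power2_eq_square algebra_simps)
  also have "\<dots> \<le> (1 - t) * p\<^sup>2 + t * q\<^sup>2" using assms by simp
  finally show ?thesis .
qed

lemma alg_t1: fixes a s :: real assumes a: "a > 0" and s: "s = a / (1 + a)" shows "s\<^sup>2 + (1 - s)\<^sup>2 * a = a / (1 + a)"
proof -
  have na: "1 + a \<noteq> 0" using a by simp
  have 1: "1 - s = 1 / (1 + a)" using na by (simp add: s field_simps)
  have "s\<^sup>2 + (1 - s)\<^sup>2 * a = (a * a + a) / ((1 + a) * (1 + a))"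
    unfolding 1 unfolding s by (simp add: power2_eq_square add_divide_distrib)
  also have "a * a + a = a * (1 + a)" by (simp add: algebra_simps)
  also have "a * (1 + a) / ((1 + a) * (1 + a)) = a / (1 + a)" using na by simp
  finally show ?thesis .
qed

locale menv =
  fixes Nc Ns :: "'a::euclidean_space \<Rightarrow> real" and \<mu> lcs ucs :: real
  assumes nc: "is_norm Nc" and ns: "is_norm Ns" and mu: "\<mu> > 0"
    and lcs: "lcs > 0" and ucs: "ucs > 0"
    and eqv: "\<And>v. lcs * Nc v \<le> Ns v \<and> Ns v \<le> ucs * Nc v"
begin

definition phi :: "'a \<Rightarrow> 'a \<Rightarrow> real" where
  "phi x u = (1/2) * (Nc u)\<^sup>2 + (1/\<mu>) * ((1/2) * (Ns (x - u))\<^sup>2)"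

abbreviation Mo where "Mo \<equiv> moreau Nc Ns \<mu>"

lemma Mo_def': "Mo x = (INF u. phi x u)"
  unfolding moreau_def phi_def by simp

lemma phi_nonneg: "phi x u \<ge> 0"
  unfolding phi_def using mu by simp

lemma bdd: "bdd_below (range (phi x))"
  using phi_nonneg by (intro bdd_belowI) auto

lemma Mo_le: "Mo x \<le> phi x u"
  unfolding Mo_def' by (rule cINF_lower[OF bdd]) simp

lemma Mo_ge: "(\<And>u. c \<le> phi x u) \<Longrightarrow> c \<le> Mo x"
  unfolding Mo_def' by (rule cINF_greatest) auto

lemma Mo_nonneg: "Mo x \<ge> 0"
  using Mo_ge phi_nonneg by blast

lemma cont_phi: "continuous_on UNIV (phi x)"
proof -
  have cNc: "continuous_on UNIV Nc" by (rule isn_cont[OF nc])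
  have cNs: "continuous_on UNIV Ns" by (rule isn_cont[OF ns])
  have "continuous_on UNIV (\<lambda>u. Ns (x - u))"
    by (rule continuous_on_compose2[OF cNs]) (auto intro!: continuous_intros)
  then show ?thesis unfolding phi_def
    by (intro continuous_intros cNc) auto
qed

lemma minimizer: "\<exists>u. Mo x = phi x u"
proof -
  obtain m where m: "m > 0" "\<And>u. m * norm u \<le> Nc u" using isn_lower[OF nc] by blast
  define R where "R = phi x 0"
  define r where "r = sqrt (2 * R) / m"
  have R0: "R \<ge> 0" unfolding R_def by (rule phi_nonneg)
  have r0: "r \<ge> 0" using phi_nonneg[of x 0] m by (auto simp: r_def R_def intro!: divide_nonneg_pos)
  have "compact (cball (0::'a) r)" by simp
  moreover have "cball (0::'a) r \<noteq> {}"
    using r0 by simp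
  moreover have "continuous_on (cball 0 r) (phi x)"
    using cont_phi continuous_on_subset by blast
  ultimately have "\<exists>z\<in>cball 0 r. \<forall>y\<in>cball 0 r. phi x z \<le> phi x y"
    by (rule continuous_attains_inf)
  then obtain z where z: "z \<in> cball 0 r" "\<And>y. y \<in> cball 0 r \<Longrightarrow> phi x z \<le> phi x y" by blast
  have z0: "phi x z \<le> R" using z(2)[of 0] m phi_nonneg[of x 0] by (simp add: R_def r_def)
  have "phi x z \<le> phi x u" for u
  proof (cases "u \<in> cball 0 r")
    case True then show ?thesis using z by blast
  next
    case False
    then have "norm u > r" by simp
    then have "m * norm u > sqrt (2 * R)" using m by (simp add: r_def field_simps)
    then have "Nc u > sqrt (2 * R)" using m(2)[of u] by linarith
    moreover have "sqrt (2 * R) \<ge> 0" using R0 by simp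
    ultimately have "(Nc u)\<^sup>2 > (sqrt (2 * R))\<^sup>2"
      by (intro power_strict_mono) auto
    also have "(sqrt (2 * R))\<^sup>2 = 2 * R" using R0 by simp
    finally have "(1/2) * (Nc u)\<^sup>2 > R" by simp
    moreover have "(1/\<mu>) * ((1/2) * (Ns (x - u))\<^sup>2) \<ge> 0" using mu by simp
    ultimately have "phi x u > R" unfolding phi_def by linarith
    then show ?thesis using z0 by simp
  qed
  then have "Mo x = phi x z" using Mo_le[of x z] Mo_ge[of "phi x z" x] by (simp add: antisym)
  then show ?thesis by blast
qed

lemma phi_scale: "phi (t *\<^sub>R x) (t *\<^sub>R u) = t\<^sup>2 * phi x u"
proof -
  have eq: "t *\<^sub>R x - t *\<^sub>R u = t *\<^sub>R (x - u)" by (simp add: scaleR_diff_right)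
  show ?thesis unfolding phi_def eq isn_scale[OF nc] isn_scale[OF ns]
    by (simp add: power_mult_distrib algebra_simps)
qed

lemma Mo_scale: "Mo (t *\<^sub>R x) = t\<^sup>2 * Mo x"
proof (cases "t = 0")
  case True
  have "Mo 0 \<le> phi 0 0" by (rule Mo_le)
  also have "phi 0 0 = 0" unfolding phi_def by (simp add: isn_0[OF nc] isn_0[OF ns])
  finally show ?thesis using True Mo_nonneg[of 0] by simp
next
  case False
  obtain u1 where u1: "Mo x = phi x u1" using minimizer by blast
  obtain u2 where u2: "Mo (t *\<^sub>R x) = phi (t *\<^sub>R x) u2" using minimizer by blast
  have "Mo (t *\<^sub>R x) \<le> phi (t *\<^sub>R x) (t *\<^sub>R u1)" by (rule Mo_le)
  also have "\<dots> = t\<^sup>2 * Mo x" using u1 phi_scale by simp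
  finally have 1: "Mo (t *\<^sub>R x) \<le> t\<^sup>2 * Mo x" .
  have "t\<^sup>2 * Mo x \<le> t\<^sup>2 * phi x ((1/t) *\<^sub>R u2)" using Mo_le by (simp add: mult_left_mono)
  also have "\<dots> = phi (t *\<^sub>R x) u2" using phi_scale[of t x "(1/t) *\<^sub>R u2"] False by simp
  finally have 2: "t\<^sup>2 * Mo x \<le> Mo (t *\<^sub>R x)" using u2 by simp
  show ?thesis using 1 2 by simp
qed

lemma Mo_lower: "(1/2) * (Nc x)\<^sup>2 / (1 + \<mu> / lcs\<^sup>2) \<le> Mo x"
proof (rule Mo_ge)
  fix u
  define p where "p = Nc u"
  define q where "q = Nc (x - u)"
  define b where "b = lcs\<^sup>2 / \<mu>"
  have b: "b > 0" using lcs mu by (simp add: b_def)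
  have p: "p \<ge> 0" and q: "q \<ge> 0" using isn_nonneg[OF nc] by (auto simp: p_def q_def)
  have r: "Nc x \<le> p + q" using isn_tri[OF nc, of u "x - u"] by (simp add: p_def q_def)
  have "lcs * q \<le> Ns (x - u)" using eqv by (simp add: q_def)
  then have "(lcs * q)\<^sup>2 \<le> (Ns (x - u))\<^sup>2" using lcs q by (intro power_mono) auto
  then have ns: "lcs\<^sup>2 * q\<^sup>2 \<le> (Ns (x - u))\<^sup>2" by (simp add: power_mult_distrib)
  have "(1/\<mu>) * ((1/2) * (lcs\<^sup>2 * q\<^sup>2)) \<le> (1/\<mu>) * ((1/2) * (Ns (x - u))\<^sup>2)"
    using ns by (intro mult_left_mono) (use mu in auto)
  then have ph: "(1/2) * p\<^sup>2 + (1/2) * b * q\<^sup>2 \<le> phi x u"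
    unfolding phi_def p_def[symmetric] b_def by (simp add: field_simps)
  have "(Nc x)\<^sup>2 \<le> (p + q)\<^sup>2" using r isn_nonneg[OF nc, of x] by (intro power_mono) auto
  also have "b * (p + q)\<^sup>2 \<le> (1 + b) * (p\<^sup>2 + b * q\<^sup>2) \<longleftrightarrow> 0 \<le> (p - b * q)\<^sup>2"
    by (simp add: power2_eq_square algebra_simps)
  then have "b * (p + q)\<^sup>2 \<le> (1 + b) * (p\<^sup>2 + b * q\<^sup>2)" by simp
  ultimately have "b * (Nc x)\<^sup>2 \<le> (1 + b) * (p\<^sup>2 + b * q\<^sup>2)"
    using b by (meson mult_left_mono less_imp_le order_trans)
  then have "(Nc x)\<^sup>2 * b / (1 + b) \<le> p\<^sup>2 + b * q\<^sup>2"
    using b by (simp add: field_simps)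
  moreover have "b / (1 + b) = 1 / (1 + \<mu> / lcs\<^sup>2)"
    using lcs mu by (simp add: b_def field_simps)
  ultimately have "(Nc x)\<^sup>2 / (1 + \<mu> / lcs\<^sup>2) \<le> p\<^sup>2 + b * q\<^sup>2"
    by (metis times_divide_eq_right mult.right_neutral divide_divide_eq_right times_divide_eq_left)
  then show "(1/2) * (Nc x)\<^sup>2 / (1 + \<mu> / lcs\<^sup>2) \<le> phi x u" using ph by linarith
qed

lemma Mo_upper: "Mo y \<le> (1/2) * (Nc y)\<^sup>2 / (1 + \<mu> / ucs\<^sup>2)"
proof -
  define a where "a = ucs\<^sup>2 / \<mu>"
  have a: "a > 0" using ucs mu by (simp add: a_def)
  define s where "s = a / (1 + a)"
  have s: "0 \<le> s" "s \<le> 1" using a by (auto simp: s_def)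
  define c where "c = Nc y"
  have c: "c \<ge> 0" using isn_nonneg[OF nc] by (simp add: c_def)
  have "y - s *\<^sub>R y = (1 - s) *\<^sub>R y" by (simp add: algebra_simps)
  then have nsy: "Ns (y - s *\<^sub>R y) = (1 - s) * Ns y" using s by (simp add: isn_scale[OF ns])
  have "Ns y \<le> ucs * c" using eqv by (simp add: c_def)
  then have nsq: "(Ns y)\<^sup>2 \<le> (ucs * c)\<^sup>2" using isn_nonneg[OF ns, of y] by (intro power_mono) auto
  have "(1/\<mu>) * ((1/2) * ((1 - s)\<^sup>2 * (Ns y)\<^sup>2)) \<le> (1/\<mu>) * ((1/2) * ((1 - s)\<^sup>2 * (ucs * c)\<^sup>2))"
    by (intro mult_left_mono nsq) (use mu in auto)
  then have "phi y (s *\<^sub>R y) \<le> (1/2) * (s * c)\<^sup>2 + (1/\<mu>) * ((1/2) * ((1 - s)\<^sup>2 * (ucs * c)\<^sup>2))"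
    unfolding phi_def nsy using s by (simp add: isn_scale[OF nc] c_def power_mult_distrib)
  also have "\<dots> = (1/2) * c\<^sup>2 * (s\<^sup>2 + (1 - s)\<^sup>2 * a)"
    using mu by (simp add: a_def field_simps power_mult_distrib)
  also have "s\<^sup>2 + (1 - s)\<^sup>2 * a = a / (1 + a)"
    using a by (rule alg_t1) (simp add: s_def)
  also have "a / (1 + a) = 1 / (1 + \<mu> / ucs\<^sup>2)"
    using ucs mu by (simp add: a_def field_simps)
  finally show ?thesis using Mo_le[of y "s *\<^sub>R y"] by (simp add: c_def)
qed

lemma Mo_convex: "convex_on UNIV Mo"
proof (rule convex_onI)
  fix t :: real and a b :: 'a assume t: "0 < t" "t < 1"
  obtain ua where ua: "Mo a = phi a ua" using minimizer by blast
  obtain ub where ub: "Mo b = phi b ub" using minimizer by blast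
  define u where "u = (1 - t) *\<^sub>R ua + t *\<^sub>R ub"
  have d: "(1 - t) *\<^sub>R a + t *\<^sub>R b - u = (1 - t) *\<^sub>R (a - ua) + t *\<^sub>R (b - ub)"
    by (simp add: u_def algebra_simps)
  have "Nc u \<le> (1 - t) * Nc ua + t * Nc ub"
    using isn_tri[OF nc] t by (simp add: u_def isn_scale[OF nc]) (metis abs_of_pos diff_gt_0_iff_gt abs_of_pos isn_scale[OF nc] isn_tri[OF nc] t(1) t(2))
  then have 1: "(Nc u)\<^sup>2 \<le> (1 - t) * (Nc ua)\<^sup>2 + t * (Nc ub)\<^sup>2"
    using t isn_nonneg[OF nc] by (intro sq_convex_aux) auto
  have "Ns ((1 - t) *\<^sub>R a + t *\<^sub>R b - u) \<le> (1 - t) * Ns (a - ua) + t * Ns (b - ub)"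
    unfolding d using isn_tri[OF ns] t
    by (metis abs_of_pos diff_gt_0_iff_gt isn_scale[OF ns])
  then have 2: "(Ns ((1 - t) *\<^sub>R a + t *\<^sub>R b - u))\<^sup>2 \<le> (1 - t) * (Ns (a - ua))\<^sup>2 + t * (Ns (b - ub))\<^sup>2"
    using t isn_nonneg[OF ns] by (intro sq_convex_aux) auto
  have "Mo ((1 - t) *\<^sub>R a + t *\<^sub>R b) \<le> phi ((1 - t) *\<^sub>R a + t *\<^sub>R b) u" by (rule Mo_le)
  also have "\<dots> \<le> (1 - t) * phi a ua + t * phi b ub"
  proof -
    have "phi ((1 - t) *\<^sub>R a + t *\<^sub>R b) u \<le> (1/2) * ((1 - t) * (Nc ua)\<^sup>2 + t * (Nc ub)\<^sup>2)
       + (1/\<mu>) * ((1/2) * ((1 - t) * (Ns (a - ua))\<^sup>2 + t * (Ns (b - ub))\<^sup>2))"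
      unfolding phi_def by (intro add_mono mult_left_mono 1 2) (use mu in auto)
    also have "\<dots> = (1 - t) * phi a ua + t * phi b ub" unfolding phi_def using mu by (simp add: field_simps)
    finally show ?thesis .
  qed
  finally show "Mo ((1 - t) *\<^sub>R a + t *\<^sub>R b) \<le> (1 - t) * Mo a + t * Mo b" using ua ub by simp
qed simp


lemma Mo_upper_quad:
  assumes sm: "L_smooth (\<lambda>v. (1/2) * (Ns v)\<^sup>2) Ns L"
  shows "\<exists>v. \<forall>z. Mo z \<le> Mo x + v \<bullet> (z - x) + (L / (2 * \<mu>)) * (Ns (z - x))\<^sup>2"
proof -
  obtain grad where g: "\<And>a b. (1/2) * (Ns b)\<^sup>2 \<le> (1/2) * (Ns a)\<^sup>2 + grad a \<bullet> (b - a) + L / 2 * (Ns (a - b))\<^sup>2"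
    using sm unfolding L_smooth_def by blast
  obtain u where u: "Mo x = phi x u" using minimizer by blast
  have "Mo z \<le> Mo x + ((1/\<mu>) *\<^sub>R grad (x - u)) \<bullet> (z - x) + (L / (2 * \<mu>)) * (Ns (z - x))\<^sup>2" for z
  proof -
    have gi: "(1/2) * (Ns (z - u))\<^sup>2 \<le> (1/2) * (Ns (x - u))\<^sup>2 + grad (x - u) \<bullet> (z - x) + L / 2 * (Ns (z - x))\<^sup>2"
      using g[of "z - u" "x - u"] isn_commute[OF ns, of x z] by simp
    have "Mo z \<le> phi z u" by (rule Mo_le)
    also have "\<dots> = (1/2) * (Nc u)\<^sup>2 + (1/\<mu>) * ((1/2) * (Ns (z - u))\<^sup>2)" by (simp add: phi_def)
    also have "\<dots> \<le> (1/2) * (Nc u)\<^sup>2 + (1/\<mu>) * ((1/2) * (Ns (x - u))\<^sup>2 + grad (x - u) \<bullet> (z - x) + L / 2 * (Ns (z - x))\<^sup>2)"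
      by (intro add_left_mono mult_left_mono gi) (use mu in auto)
    also have "\<dots> = phi x u + (1/\<mu>) * (grad (x - u) \<bullet> (z - x)) + (L / (2 * \<mu>)) * (Ns (z - x))\<^sup>2"
      unfolding phi_def using mu by (simp add: field_simps)
    finally show ?thesis using u by simp
  qed
  then show ?thesis by blast
qed

end

lemma subgrad_from_upper:
  fixes M :: "'a::real_inner \<Rightarrow> real"
  assumes cvx: "convex_on UNIV M"
    and up: "\<And>z. M z \<le> M x + v \<bullet> (z - x) + K * (N (z - x))\<^sup>2"
    and hom: "\<And>t z. N (t *\<^sub>R z) = \<bar>t\<bar> * N z"
  shows "M x + v \<bullet> (z - x) \<le> M z"
proof (rule field_le_epsilon)
  fix e :: real assume e: "e > 0"
  define d where "d = z - x"
  define C where "C = \<bar>K\<bar> * (N d)\<^sup>2"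
  have C: "C \<ge> 0" by (simp add: C_def)
  define t where "t = min 1 (e / (C + 1))"
  have t: "0 < t" "t \<le> 1" using e C by (auto simp: t_def)
  have tC: "t * C \<le> e"
  proof -
    have "t \<le> e / (C + 1)" by (simp add: t_def)
    then have "t * (C + 1) \<le> e" using C by (simp add: field_simps)
    then show ?thesis using t by (simp add: algebra_simps)
  qed
  have mid: "M x \<le> (1 - 1/2) * M (x + t *\<^sub>R d) + (1/2) * M (x - t *\<^sub>R d)"
  proof -
    have "M ((1 - 1/2) *\<^sub>R (x + t *\<^sub>R d) + (1/2) *\<^sub>R (x - t *\<^sub>R d)) \<le> (1 - 1/2) * M (x + t *\<^sub>R d) + (1/2) * M (x - t *\<^sub>R d)"
      by (rule convex_onD[OF cvx]) auto
    moreover have "(1 - 1/2) *\<^sub>R (x + t *\<^sub>R d) + (1/2) *\<^sub>R (x - t *\<^sub>R d) = x"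
    proof -
      have "(1 - 1/2) *\<^sub>R (x + t *\<^sub>R d) + (1/2) *\<^sub>R (x - t *\<^sub>R d) = (1/2::real) *\<^sub>R ((x + t *\<^sub>R d) + (x - t *\<^sub>R d))"
        by (simp only: scaleR_add_right) simp
      also have "(x + t *\<^sub>R d) + (x - t *\<^sub>R d) = (2::real) *\<^sub>R x" by (simp add: scaleR_2)
      finally show ?thesis by simp
    qed
    ultimately show ?thesis by simp
  qed
  have upm: "M (x - t *\<^sub>R d) \<le> M x - t * (v \<bullet> d) + K * (t\<^sup>2 * (N d)\<^sup>2)"
  proof -
    have "M (x - t *\<^sub>R d) \<le> M x + v \<bullet> ((-t) *\<^sub>R d) + K * (N ((-t) *\<^sub>R d))\<^sup>2"
      using up[of "x - t *\<^sub>R d"] by simp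
    also have "(N ((-t) *\<^sub>R d))\<^sup>2 = t\<^sup>2 * (N d)\<^sup>2" using hom[of "-t" d] t by (simp add: power_mult_distrib)
    finally show ?thesis by (simp add: inner_scaleR_right)
  qed
  have cv: "M (x + t *\<^sub>R d) \<le> (1 - t) * M x + t * M z"
  proof -
    have "M ((1 - t) *\<^sub>R x + t *\<^sub>R z) \<le> (1 - t) * M x + t * M z"
      by (rule convex_onD[OF cvx]) (use t in auto)
    moreover have "(1 - t) *\<^sub>R x + t *\<^sub>R z = x + t *\<^sub>R d" by (simp add: d_def algebra_simps)
    ultimately show ?thesis by simp
  qed
  have X0: "t\<^sup>2 * (N d)\<^sup>2 \<ge> 0" by simp
  have "K * (t\<^sup>2 * (N d)\<^sup>2) \<le> \<bar>K\<bar> * (t\<^sup>2 * (N d)\<^sup>2)" by (rule mult_right_mono[OF abs_ge_self X0])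
  also have "\<dots> = t * (t * C)" by (simp add: C_def power2_eq_square algebra_simps)
  also have "\<dots> \<le> t * e" using tC t by (simp add: mult_left_mono)
  finally have Ke: "K * (t\<^sup>2 * (N d)\<^sup>2) \<le> t * e" .
  from mid upm cv have "t * (M x + v \<bullet> d) \<le> t * M z + K * (t\<^sup>2 * (N d)\<^sup>2)"
    by (simp add: algebra_simps)
  with Ke have "t * (M x + v \<bullet> d) \<le> t * (M z + e)" by (simp add: algebra_simps)
  then show "M x + v \<bullet> (z - x) \<le> M z + e" using t by (simp add: d_def)
qed

lemma euler_sub:
  fixes M :: "'a::real_inner \<Rightarrow> real"
  assumes sub: "\<And>z. M x + v \<bullet> (z - x) \<le> M z"
    and hom: "\<And>t. M (t *\<^sub>R x) = t\<^sup>2 * M x" and M0: "M x \<ge> 0"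
  shows "v \<bullet> x = 2 * M x"
proof -
  define a where "a = v \<bullet> x"
  define m where "m = M x"
  define s where "s = (a - 2 * m) / (2 * m + 1)"
  have m: "m \<ge> 0" using M0 by (simp add: m_def)
  have as: "a = 2 * m + s * (2 * m + 1)" using m by (simp add: s_def field_simps)
  have "M x + v \<bullet> ((1 + s) *\<^sub>R x - x) \<le> M ((1 + s) *\<^sub>R x)" by (rule sub)
  moreover have "(1 + s) *\<^sub>R x - x = s *\<^sub>R x" by (simp add: algebra_simps)
  ultimately have "m + s * a \<le> (1 + s)\<^sup>2 * m" using hom[of "1 + s"] by (simp add: m_def a_def)
  then have "s\<^sup>2 * (m + 1) \<le> 0" unfolding as by (simp add: power2_eq_square algebra_simps)
  moreover have "s\<^sup>2 * (m + 1) \<ge> 0" using m by simp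
  ultimately have "s\<^sup>2 * (m + 1) = 0" by linarith
  then have "s = 0" using m by simp
  then show ?thesis using as by (simp add: a_def m_def)
qed

lemma dual_sub:
  fixes M :: "'a::real_inner \<Rightarrow> real"
  assumes sub: "\<And>z. M x + v \<bullet> (z - x) \<le> M z"
    and hom: "\<And>t. M (t *\<^sub>R y) = t\<^sup>2 * M y" and eu: "v \<bullet> x = 2 * M x"
    and My: "M y \<le> c\<^sup>2 * M x" and c: "c > 0"
  shows "v \<bullet> y \<le> 2 * c * M x"
proof -
  have "M x + v \<bullet> ((1/c) *\<^sub>R y - x) \<le> M ((1/c) *\<^sub>R y)" by (rule sub)
  also have "\<dots> = M y / c\<^sup>2" using hom[of "1/c"] by (simp add: power_divide)
  also have "\<dots> \<le> M x" using My c by (simp add: field_simps)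
  finally have "(1/c) * (v \<bullet> y) \<le> 2 * M x" using eu by (simp add: inner_diff_right)
  then show ?thesis using c by (simp add: field_simps)
qed

lemma deriv_lim:
  fixes M :: "'a::real_inner \<Rightarrow> real"
  assumes up: "\<And>z. M z \<le> M x + v \<bullet> (z - x) + K * (N (z - x))\<^sup>2"
    and sub: "\<And>z. M x + v \<bullet> (z - x) \<le> M z"
    and hom: "\<And>t z. N (t *\<^sub>R z) = \<bar>t\<bar> * N z"
  shows "(\<lambda>n. real (Suc n) * (M (x + (1 / real (Suc n)) *\<^sub>R e) - M x)) \<longlonglongrightarrow> v \<bullet> e"
proof (rule tendsto_sandwich)
  let ?f = "\<lambda>n. real (Suc n) * (M (x + (1 / real (Suc n)) *\<^sub>R e) - M x)"
  show "\<forall>\<^sub>F n in sequentially. v \<bullet> e \<le> ?f n"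
  proof (intro always_eventually allI)
    fix n
    define h where "h = 1 / real (Suc n)"
    have h: "h > 0" "real (Suc n) * h = 1" by (auto simp: h_def)
    have "M x + v \<bullet> (h *\<^sub>R e) \<le> M (x + h *\<^sub>R e)" using sub[of "x + h *\<^sub>R e"] by simp
    then have "h * (v \<bullet> e) \<le> M (x + h *\<^sub>R e) - M x" by simp
    then have "real (Suc n) * (h * (v \<bullet> e)) \<le> real (Suc n) * (M (x + h *\<^sub>R e) - M x)"
      by (intro mult_left_mono) auto
    then show "v \<bullet> e \<le> ?f n" using h by (simp add: h_def)
  qed
  show "\<forall>\<^sub>F n in sequentially. ?f n \<le> v \<bullet> e + K * (N e)\<^sup>2 * inverse (real (Suc n))"
  proof (intro always_eventually allI)
    fix n
    define h where "h = 1 / real (Suc n)"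
    have h: "h > 0" "real (Suc n) * h = 1" by (auto simp: h_def)
    have "M (x + h *\<^sub>R e) \<le> M x + v \<bullet> (h *\<^sub>R e) + K * (N (h *\<^sub>R e))\<^sup>2" using up[of "x + h *\<^sub>R e"] by simp
    also have "(N (h *\<^sub>R e))\<^sup>2 = h * h * (N e)\<^sup>2" using hom[of h e] h by (simp add: power_mult_distrib power2_eq_square)
    finally have "M (x + h *\<^sub>R e) - M x \<le> h * (v \<bullet> e + K * (N e)\<^sup>2 * h)" by (simp add: algebra_simps)
    then have "real (Suc n) * (M (x + h *\<^sub>R e) - M x) \<le> real (Suc n) * (h * (v \<bullet> e + K * (N e)\<^sup>2 * h))"
      by (intro mult_left_mono) auto
    also have "\<dots> = (real (Suc n) * h) * (v \<bullet> e + K * (N e)\<^sup>2 * h)" by (simp only: mult.assoc)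
    also have "\<dots> = v \<bullet> e + K * (N e)\<^sup>2 * h" using h(2) by (simp only: mult_1)
    finally show "?f n \<le> v \<bullet> e + K * (N e)\<^sup>2 * inverse (real (Suc n))" by (simp add: h_def inverse_eq_divide)
  qed
  show "(\<lambda>n. v \<bullet> e) \<longlonglongrightarrow> v \<bullet> e" by simp
  have "(\<lambda>n. v \<bullet> e + K * (N e)\<^sup>2 * inverse (real (Suc n))) \<longlonglongrightarrow> v \<bullet> e + K * (N e)\<^sup>2 * 0"
    by (intro tendsto_intros LIMSEQ_inverse_real_of_nat)
  then show "(\<lambda>n. v \<bullet> e + K * (N e)\<^sup>2 * inverse (real (Suc n))) \<longlonglongrightarrow> v \<bullet> e" by simp
qed

lemma hist_sets:
  fixes x w :: "nat \<Rightarrow> 'w \<Rightarrow> 'b::topological_space"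
  shows "space (hist M x w n) = space M"
    and "sets (hist M x w n) = sigma_sets (space M)
     ({x i -` B \<inter> space M | i B. i \<le> n \<and> B \<in> sets borel} \<union>
      {w i -` B \<inter> space M | i B. i < n \<and> B \<in> sets borel})"
  unfolding hist_def by (auto intro!: sets_measure_of space_measure_of)

lemma hist_subalg:
  fixes x w :: "nat \<Rightarrow> 'w \<Rightarrow> 'b::topological_space"
  assumes xm: "\<And>i. x i \<in> borel_measurable M" and wm: "\<And>i. w i \<in> borel_measurable M"
  shows "subalgebra M (hist M x w n)"
proof -
  let ?G = "{x i -` B \<inter> space M | i B. i \<le> n \<and> B \<in> sets borel} \<union>
      {w i -` B \<inter> space M | i B. i < n \<and> B \<in> sets borel}"
  have G: "?G \<subseteq> Pow (space M)" by auto
  have "?G \<subseteq> sets M" using xm wm by (auto intro: measurable_sets)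
  then have "sets (sigma (space M) ?G) \<subseteq> sets M" using sigma_le_sets[OF G, of M] by simp
  then show ?thesis unfolding subalgebra_def using hist_sets(1)[of M x w n] by (simp add: hist_def)
qed

lemma hist_meas:
  fixes x w :: "nat \<Rightarrow> 'w \<Rightarrow> 'b::topological_space"
  assumes "i \<le> n"
  shows "x i \<in> borel_measurable (hist M x w n)"
proof (rule measurableI)
  fix \<omega> assume "\<omega> \<in> space (hist M x w n)" then show "x i \<omega> \<in> space borel" by simp
next
  fix A :: "'b set" assume A: "A \<in> sets borel"
  have "x i -` A \<inter> space M \<in> sigma_sets (space M)
     ({x i -` B \<inter> space M | i B. i \<le> n \<and> B \<in> sets borel} \<union>
      {w i -` B \<inter> space M | i B. i < n \<and> B \<in> sets borel})"
    by (rule sigma_sets.Basic) (use A assms in blast)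
  then show "x i -` A \<inter> space (hist M x w n) \<in> sets (hist M x w n)"
    using hist_sets[of M x w n] by simp
qed

lemma contr_cont:
  fixes H :: "'a::euclidean_space \<Rightarrow> 'a"
  assumes nc: "is_norm N" and c: "\<And>u v. N (H u - H v) \<le> \<gamma> * N (u - v)" and g: "\<gamma> \<ge> 0"
  shows "continuous_on UNIV H"
proof -
  obtain m where m: "m > 0" "\<And>u. m * norm u \<le> N u" using isn_lower[OF nc] by blast
  have cN: "continuous_on UNIV N" by (rule isn_cont[OF nc])
  show ?thesis unfolding continuous_on_iff
  proof (intro ballI allI impI)
    fix x :: 'a and e :: real assume e: "e > 0"
    define e' where "e' = m * e / (\<gamma> + 1)"
    have e': "e' > 0" using m e g by (simp add: e'_def)
    obtain d where d: "d > 0" "\<And>x'. dist x' 0 < d \<Longrightarrow> dist (N x') (N 0) < e'"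
      using cN e' unfolding continuous_on_iff by blast
    show "\<exists>d>0. \<forall>x'\<in>UNIV. dist x' x < d \<longrightarrow> dist (H x') (H x) < e"
    proof (intro exI[of _ d] conjI ballI impI)
      fix x' assume "dist x' x < d"
      then have "dist (x' - x) 0 < d" by (simp add: dist_norm)
      then have "dist (N (x' - x)) (N 0) < e'" by (rule d)
      then have Nl: "N (x' - x) < e'" using isn_0[OF nc] isn_nonneg[OF nc, of "x' - x"] by (simp add: dist_real_def)
      have "m * norm (H x' - H x) \<le> N (H x' - H x)" by (rule m)
      also have "\<dots> \<le> \<gamma> * N (x' - x)" by (rule c)
      also have "\<dots> \<le> \<gamma> * e'" using Nl g by (simp add: mult_left_mono)
      also have "\<dots> < m * e"
      proof -
        have "\<gamma> * e' = (m * e) * (\<gamma> / (\<gamma> + 1))" using g by (simp add: e'_def field_simps)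
        also have "\<dots> < (m * e) * 1" using m e g by (intro mult_strict_left_mono) auto
        finally show ?thesis by simp
      qed
      finally show "dist (H x') (H x) < e" using m by (simp add: dist_norm)
    qed (rule d)
  qed
qed

lemma sq_sum_le: fixes a b :: real shows "(a + b)\<^sup>2 \<le> 2 * a\<^sup>2 + 2 * b\<^sup>2"
proof -
  have "0 \<le> (a - b)\<^sup>2" by simp
  then show ?thesis by (simp add: power2_eq_square algebra_simps)
qed

lemma sq_le_of_le: fixes a b :: real shows "0 \<le> a \<Longrightarrow> a \<le> b \<Longrightarrow> a\<^sup>2 \<le> b\<^sup>2"
  by (rule power_mono) auto

definition dvec :: "(real^'d \<Rightarrow> real) \<Rightarrow> real^'d \<Rightarrow> real^'d" where
  "dvec f z = (\<chi> i. lim (\<lambda>n. real (Suc n) * (f (z + (1 / real (Suc n)) *\<^sub>R axis i 1) - f z)))"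

lemma dvec_props:
  fixes Nc Ns :: "real^'d \<Rightarrow> real" and z :: "real^'d"
  assumes me: "menv Nc Ns \<mu> lcs ucs" and sm: "L_smooth (\<lambda>v. (1/2) * (Ns v)\<^sup>2) Ns L"
  shows "\<And>y. moreau Nc Ns \<mu> y \<le> moreau Nc Ns \<mu> z + dvec (moreau Nc Ns \<mu>) z \<bullet> (y - z) + (L / (2 * \<mu>)) * (Ns (y - z))\<^sup>2"
    and "\<And>y. moreau Nc Ns \<mu> z + dvec (moreau Nc Ns \<mu>) z \<bullet> (y - z) \<le> moreau Nc Ns \<mu> y"
    and "\<And>i. (\<lambda>n. real (Suc n) * (moreau Nc Ns \<mu> (z + (1 / real (Suc n)) *\<^sub>R axis i 1) - moreau Nc Ns \<mu> z))
           \<longlonglongrightarrow> dvec (moreau Nc Ns \<mu>) z $ i"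
proof -
  interpret menv Nc Ns \<mu> lcs ucs by (rule me)
  obtain v where v: "\<And>y. Mo y \<le> Mo z + v \<bullet> (y - z) + (L / (2 * \<mu>)) * (Ns (y - z))\<^sup>2"
    using Mo_upper_quad[OF sm, of z] by blast
  have hom: "\<And>t u. Ns (t *\<^sub>R u) = \<bar>t\<bar> * Ns u" by (rule isn_scale[OF ns])
  have sub: "Mo z + v \<bullet> (y - z) \<le> Mo y" for y
    by (rule subgrad_from_upper[OF Mo_convex, of z v "L / (2 * \<mu>)" Ns, OF v hom])
  have lim: "(\<lambda>n. real (Suc n) * (Mo (z + (1 / real (Suc n)) *\<^sub>R axis i 1) - Mo z)) \<longlonglongrightarrow> v $ i" for i
    using deriv_lim[of Mo z v "L / (2 * \<mu>)" Ns, OF v sub hom, of "axis i 1"] by (simp add: cart_eq_inner_axis)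
  have dv: "dvec Mo z = v"
    unfolding dvec_def vec_eq_iff using lim by (simp add: limI)
  show "\<And>y. Mo y \<le> Mo z + dvec Mo z \<bullet> (y - z) + (L / (2 * \<mu>)) * (Ns (y - z))\<^sup>2" using v dv by simp
  show "\<And>y. Mo z + dvec Mo z \<bullet> (y - z) \<le> Mo y" using sub dv by simp
  show "\<And>i. (\<lambda>n. real (Suc n) * (Mo (z + (1 / real (Suc n)) *\<^sub>R axis i 1) - Mo z)) \<longlonglongrightarrow> dvec Mo z $ i"
    using lim dv by simp
qed

lemma dvec_meas:
  fixes Nc Ns :: "real^'d \<Rightarrow> real"
  assumes me: "menv Nc Ns \<mu> lcs ucs" and sm: "L_smooth (\<lambda>v. (1/2) * (Ns v)\<^sup>2) Ns L"
  shows "(\<lambda>z. dvec (moreau Nc Ns \<mu>) z $ i) \<in> borel_measurable borel"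
proof -
  interpret menv Nc Ns \<mu> lcs ucs by (rule me)
  have Mm[measurable]: "Mo \<in> borel_measurable borel"
    by (rule borel_measurable_continuous_onI[OF convex_on_continuous[OF open_UNIV Mo_convex]])
  have sh[measurable]: "(\<lambda>z::real^'d. z + c *\<^sub>R a) \<in> borel_measurable borel" for c a
    by (intro borel_measurable_continuous_onI continuous_intros)
  show ?thesis
  proof (rule borel_measurable_LIMSEQ_metric)
    fix n
    show "(\<lambda>z. real (Suc n) * (Mo (z + (1 / real (Suc n)) *\<^sub>R axis i 1) - Mo z)) \<in> borel_measurable borel"
      by measurable
  next
    fix z :: "real^'d" assume "z \<in> space borel"
    show "(\<lambda>n. real (Suc n) * (Mo (z + (1 / real (Suc n)) *\<^sub>R axis i 1) - Mo z)) \<longlonglongrightarrow> dvec Mo z $ i"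
      by (rule dvec_props(3)[OF me sm])
  qed
qed

lemma dvec_bound:
  fixes Nc Ns :: "real^'d \<Rightarrow> real"
  assumes me: "menv Nc Ns \<mu> lcs ucs" and sm: "L_smooth (\<lambda>v. (1/2) * (Ns v)\<^sup>2) Ns L"
  shows "\<bar>dvec (moreau Nc Ns \<mu>) z $ i\<bar> \<le> (1/2) * (1 + Nc (axis i 1))\<^sup>2 * (Nc z + 1)"
proof -
  interpret menv Nc Ns \<mu> lcs ucs by (rule me)
  define s where "s = Nc z + 1"
  define a where "a = (axis i 1 :: real^'d)"
  define v where "v = dvec Mo z"
  have s: "s \<ge> 1" using isn_nonneg[OF nc, of z] by (simp add: s_def)
  have na: "Nc a \<ge> 0" using isn_nonneg[OF nc] by simp
  have den: "1 + \<mu> / ucs\<^sup>2 \<ge> 1" using mu ucs by simp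
  have key: "t * (v $ i) \<le> (1/2) * s\<^sup>2 * (1 + Nc a)\<^sup>2" if t: "\<bar>t\<bar> = s" for t
  proof -
    have "Mo z + v \<bullet> ((z + t *\<^sub>R a) - z) \<le> Mo (z + t *\<^sub>R a)" unfolding v_def by (rule dvec_props(2)[OF me sm])
    then have "t * (v $ i) \<le> Mo (z + t *\<^sub>R a)" using Mo_nonneg[of z]
      by (simp add: a_def cart_eq_inner_axis[symmetric] inner_commute)
    also have "\<dots> \<le> (1/2) * (Nc (z + t *\<^sub>R a))\<^sup>2 / (1 + \<mu> / ucs\<^sup>2)" by (rule Mo_upper)
    also have "\<dots> \<le> (1/2) * (Nc (z + t *\<^sub>R a))\<^sup>2"
      using divide_left_mono[OF den, of "(1/2) * (Nc (z + t *\<^sub>R a))\<^sup>2"] den by simp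
    also have "(Nc (z + t *\<^sub>R a)) \<le> s * (1 + Nc a)"
    proof -
      have "Nc (z + t *\<^sub>R a) \<le> Nc z + s * Nc a" using isn_tri[OF nc, of z "t *\<^sub>R a"] t by (simp add: isn_scale[OF nc])
      also have "\<dots> \<le> s * (1 + Nc a)" using s na by (simp add: s_def algebra_simps)
      finally show ?thesis .
    qed
    then have "(Nc (z + t *\<^sub>R a))\<^sup>2 \<le> (s * (1 + Nc a))\<^sup>2" using isn_nonneg[OF nc] by (intro sq_le_of_le) auto
    then have "(1/2) * (Nc (z + t *\<^sub>R a))\<^sup>2 \<le> (1/2) * s\<^sup>2 * (1 + Nc a)\<^sup>2" by (simp add: power_mult_distrib)
    finally show ?thesis .
  qed
  have "s * (v $ i) \<le> (1/2) * s\<^sup>2 * (1 + Nc a)\<^sup>2" using key[of s] s by simp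
  moreover have "(- s) * (v $ i) \<le> (1/2) * s\<^sup>2 * (1 + Nc a)\<^sup>2" using key[of "-s"] s by simp
  ultimately have "s * \<bar>v $ i\<bar> \<le> s * ((1/2) * (1 + Nc a)\<^sup>2 * s)"
    by (simp add: abs_if power2_eq_square algebra_simps)
  then have "\<bar>v $ i\<bar> \<le> (1/2) * (1 + Nc a)\<^sup>2 * s" using s by simp
  then show ?thesis by (simp add: v_def a_def s_def)
qed

lemma alg2: fixes c P Q R Y E :: real assumes "P \<noteq> 0" "Q \<noteq> 0" "R \<noteq> 0"
  shows "(2 * c * P / (R * Q)) * Y / (2 * (P / Q)) * E = c / R * Y * E"
  using assms by (simp add: field_simps)

lemma alg3: fixes u v b L P m l s :: real assumes "b \<noteq> 0" "m \<noteq> 0" "l \<noteq> 0" "s \<noteq> 0"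
  shows "(4 * u * v * b * L * P / (m * l * s)) / (2 * b) = 2 * (u * v * L) * P / ((m * s) * l)"
  using assms by (simp add: field_simps)

lemma alg4: fixes g n P Q :: real assumes "P \<noteq> 0" "Q \<noteq> 0"
  shows "(1/2) * (g * n)\<^sup>2 / P = g\<^sup>2 * (Q / P) * ((1/2) * n\<^sup>2 / Q)"
  using assms by (simp add: field_simps power_mult_distrib)

lemma alg5: fixes n m D :: real assumes "(1/2) * n / D \<le> m" "D > 0"
  shows "n \<le> 2 * D * m"
  using assms by (simp add: field_simps)

lemma final_alg:
  fixes Mz nz2 nst2 q K e A B L \<mu> lcs les ucs ues a2 :: real
  assumes Mz: "Mz \<ge> 0" and nz: "nz2 \<ge> 0" "nz2 \<le> 2 * (1 + \<mu> / lcs\<^sup>2) * Mz"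
    and q: "q \<le> 2 * (ucs\<^sup>2 / les\<^sup>2) * nz2 + 2 * (ucs\<^sup>2 / les\<^sup>2) * nst2" and nst: "nst2 \<ge> 0"
    and K: "K = L / (2 * \<mu>)" "L \<ge> 0" and e: "e > 0" and AB: "A > 0" "B > 0"
    and b: "0 < lcs" "0 < les" "les \<le> 1" "1 \<le> ucs" "1 \<le> ues" and mu: "\<mu> > 0"
  shows "(1 - 2 * a2 * e) * Mz + 8 * K * e\<^sup>2 * ucs\<^sup>2 * nz2 + 2 * K * e\<^sup>2 * ues\<^sup>2 * (A + B * q)
     \<le> (1 - 2 * a2 * e + (4 * ucs\<^sup>2 * ues\<^sup>2 * (B + 2) * L * (lcs\<^sup>2 + \<mu>) / (\<mu> * lcs\<^sup>2 * les\<^sup>2)) * e\<^sup>2) * Mz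
        + (4 * ucs\<^sup>2 * ues\<^sup>2 * (B + 2) * L * (lcs\<^sup>2 + \<mu>) / (\<mu> * lcs\<^sup>2 * les\<^sup>2)) / (2 * (B + 2))
          * (A + 2 * B * nst2) / (2 * (1 + \<mu> / lcs\<^sup>2)) * e\<^sup>2"
proof -
  define r where "r = ucs\<^sup>2 / les\<^sup>2"
  have K0: "K \<ge> 0" using K mu by simp
  have r1: "r \<ge> 1" using b by (simp add: r_def power_le_one_iff le_divide_eq)
  have ur: "ucs\<^sup>2 \<le> ues\<^sup>2 * r"
  proof -
    have "ucs\<^sup>2 \<le> r" using b by (simp add: r_def le_divide_eq) (metis mult_left_le one_le_power power_le_one order_trans less_le b(2) b(3) zero_le_power2 mult_le_cancel_left1)
    also have "r \<le> ues\<^sup>2 * r" using b r1 by (simp add: mult_le_cancel_right1 one_le_power)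
    finally show ?thesis .
  qed
  have ke: "K * e\<^sup>2 \<ge> 0" using K0 by simp
  have "8 * K * e\<^sup>2 * ucs\<^sup>2 * nz2 + 2 * K * e\<^sup>2 * ues\<^sup>2 * (B * (2 * r * nz2))
      = K * e\<^sup>2 * nz2 * (8 * ucs\<^sup>2 + 4 * ues\<^sup>2 * B * r)" by (simp add: algebra_simps)
  also have "\<dots> \<le> K * e\<^sup>2 * nz2 * (4 * ues\<^sup>2 * r * (B + 2))"
    using ur ke nz K0 by (intro mult_left_mono) (auto simp: algebra_simps)
  also have "\<dots> \<le> K * e\<^sup>2 * (2 * (1 + \<mu> / lcs\<^sup>2) * Mz) * (4 * ues\<^sup>2 * r * (B + 2))"
    using ke nz AB r1 by (intro mult_right_mono mult_left_mono) auto
  also have "\<dots> = (4 * ucs\<^sup>2 * ues\<^sup>2 * (B + 2) * L * (lcs\<^sup>2 + \<mu>) / (\<mu> * lcs\<^sup>2 * les\<^sup>2)) * e\<^sup>2 * Mz"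
    using b mu by (simp add: K r_def field_simps)
  finally have T1: "8 * K * e\<^sup>2 * ucs\<^sup>2 * nz2 + 2 * K * e\<^sup>2 * ues\<^sup>2 * (B * (2 * r * nz2))
      \<le> (4 * ucs\<^sup>2 * ues\<^sup>2 * (B + 2) * L * (lcs\<^sup>2 + \<mu>) / (\<mu> * lcs\<^sup>2 * les\<^sup>2)) * e\<^sup>2 * Mz" .
  have "2 * K * e\<^sup>2 * ues\<^sup>2 * (A + B * (2 * r * nst2)) \<le> 2 * K * e\<^sup>2 * ues\<^sup>2 * (r * (A + 2 * B * nst2))"
  proof -
    have "A + B * (2 * r * nst2) \<le> r * (A + 2 * B * nst2)"
    proof -
      have "A \<le> r * A" using r1 AB by (simp add: mult_le_cancel_right1)
      then show ?thesis by (simp add: algebra_simps)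
    qed
    then show ?thesis using ke by (intro mult_left_mono) auto
  qed
  also have "\<dots> = (4 * ucs\<^sup>2 * ues\<^sup>2 * (B + 2) * L * (lcs\<^sup>2 + \<mu>) / (\<mu> * lcs\<^sup>2 * les\<^sup>2)) / (2 * (B + 2))
          * (A + 2 * B * nst2) / (2 * (1 + \<mu> / lcs\<^sup>2)) * e\<^sup>2"
  proof -
    have nz: "lcs\<^sup>2 + \<mu> \<noteq> 0" "B + 2 \<noteq> 0" "\<mu> \<noteq> 0" "lcs \<noteq> 0" "les \<noteq> 0"
      "1 + \<mu> / lcs\<^sup>2 \<noteq> 0"
    proof -
      have p1: "lcs\<^sup>2 + \<mu> > 0" using mu by (intro add_nonneg_pos) auto
      have p2: "1 + \<mu> / lcs\<^sup>2 > 0" using mu b by (intro add_pos_nonneg) auto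
      show "lcs\<^sup>2 + \<mu> \<noteq> 0" "B + 2 \<noteq> 0" "\<mu> \<noteq> 0" "lcs \<noteq> 0" "les \<noteq> 0"
      "1 + \<mu> / lcs\<^sup>2 \<noteq> 0" using p1 p2 b mu AB by auto
    qed
    have "1 + \<mu> / lcs\<^sup>2 = (lcs\<^sup>2 + \<mu>) / lcs\<^sup>2" using nz by (simp add: field_simps)
    moreover have "(4 * ucs\<^sup>2 * ues\<^sup>2 * (B + 2) * L * (lcs\<^sup>2 + \<mu>) / (\<mu> * lcs\<^sup>2 * les\<^sup>2)) / (2 * (B + 2))
       = 2 * (ucs\<^sup>2 * ues\<^sup>2 * L) * (lcs\<^sup>2 + \<mu>) / ((\<mu> * les\<^sup>2) * lcs\<^sup>2)"
      by (rule alg3) (use nz in auto)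
    moreover have "(2 * (ucs\<^sup>2 * ues\<^sup>2 * L) * (lcs\<^sup>2 + \<mu>) / ((\<mu> * les\<^sup>2) * lcs\<^sup>2)) * (A + 2 * B * nst2)
        / (2 * ((lcs\<^sup>2 + \<mu>) / lcs\<^sup>2)) * e\<^sup>2 = (ucs\<^sup>2 * ues\<^sup>2 * L) / (\<mu> * les\<^sup>2) * (A + 2 * B * nst2) * e\<^sup>2"
      by (rule alg2) (use nz in auto)
    ultimately have e1: "(4 * ucs\<^sup>2 * ues\<^sup>2 * (B + 2) * L * (lcs\<^sup>2 + \<mu>) / (\<mu> * lcs\<^sup>2 * les\<^sup>2)) / (2 * (B + 2))
          * (A + 2 * B * nst2) / (2 * (1 + \<mu> / lcs\<^sup>2)) * e\<^sup>2 = L * ucs\<^sup>2 * ues\<^sup>2 / (\<mu> * les\<^sup>2) * (A + 2 * B * nst2) * e\<^sup>2"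
      by (simp add: ac_simps)
    have e2: "2 * K * e\<^sup>2 * ues\<^sup>2 * (r * (A + 2 * B * nst2)) = L * ucs\<^sup>2 * ues\<^sup>2 / (\<mu> * les\<^sup>2) * (A + 2 * B * nst2) * e\<^sup>2"
      using nz by (simp add: K r_def field_simps)
    show ?thesis using e1 e2 by simp
  qed
  finally have T2: "2 * K * e\<^sup>2 * ues\<^sup>2 * (A + B * (2 * r * nst2)) \<le> (4 * ucs\<^sup>2 * ues\<^sup>2 * (B + 2) * L * (lcs\<^sup>2 + \<mu>) / (\<mu> * lcs\<^sup>2 * les\<^sup>2)) / (2 * (B + 2))
          * (A + 2 * B * nst2) / (2 * (1 + \<mu> / lcs\<^sup>2)) * e\<^sup>2" .
  have "2 * K * e\<^sup>2 * ues\<^sup>2 * (A + B * q) \<le> 2 * K * e\<^sup>2 * ues\<^sup>2 * (A + B * (2 * r * nz2 + 2 * r * nst2))"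
    using q AB ke by (intro mult_left_mono add_left_mono) (auto simp: r_def)
  also have "\<dots> = 2 * K * e\<^sup>2 * ues\<^sup>2 * (B * (2 * r * nz2)) + 2 * K * e\<^sup>2 * ues\<^sup>2 * (A + B * (2 * r * nst2))"
    by (simp add: algebra_simps)
  finally have T3: "2 * K * e\<^sup>2 * ues\<^sup>2 * (A + B * q) \<le> 2 * K * e\<^sup>2 * ues\<^sup>2 * (B * (2 * r * nz2)) + 2 * K * e\<^sup>2 * ues\<^sup>2 * (A + B * (2 * r * nst2))" .
  show ?thesis using T1 T2 T3 by (simp add: algebra_simps)
qed

theorem proposition1:
  fixes Nc Ne Ns :: "real ^ 'd \<Rightarrow> real"
    and H :: "real ^ 'd \<Rightarrow> real ^ 'd"
    and \<gamma> A B L \<mu> lcs les ucs ues :: real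
    and xstar x0 :: "real ^ 'd"
    and M :: "'w measure"
    and x w :: "nat \<Rightarrow> 'w \<Rightarrow> real ^ 'd"
    and \<epsilon> :: "nat \<Rightarrow> real"
    and k :: nat
  assumes norms: "is_norm Nc" "is_norm Ne" "is_norm Ns"
    and gamma: "0 < \<gamma>" "\<gamma> < 1"
    and contr: "\<And>u v. Nc (H u - H v) \<le> \<gamma> * Nc (u - v)"
    and fixpt: "H xstar = xstar"
    and P: "prob_space M"
    and x0: "\<And>\<omega>. x 0 \<omega> = x0"
    and rec: "\<And>n \<omega>. x (Suc n) \<omega> = x n \<omega> + \<epsilon> n *\<^sub>R (H (x n \<omega>) - x n \<omega> + w n \<omega>)"
    and w_meas: "\<And>n. w n \<in> borel_measurable M"
    and w_int: "\<And>n. integrable M (w n)"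
    and w_mean: "\<And>n i. AE \<omega> in M. real_cond_exp M (hist M x w n) (\<lambda>\<omega>. w n \<omega> $ i) \<omega> = 0"
    and w_var: "\<And>n. AE \<omega> in M. nn_cond_exp M (hist M x w n) (\<lambda>\<omega>. ennreal ((Ne (w n \<omega>))\<^sup>2))
                   \<omega> \<le> ennreal (A + B * (Ne (x n \<omega>))\<^sup>2)"
    and AB: "A > 0" "B > 0"
    and eps_pos: "\<And>n. \<epsilon> n > 0"
    and eps_mono: "\<And>n. \<epsilon> (Suc n) \<le> \<epsilon> n"
    and smooth: "L_smooth (\<lambda>v. (1/2) * (Ns v)\<^sup>2) Ns L"
    and bnds: "0 < lcs" "lcs \<le> 1" "0 < les" "les \<le> 1" "1 \<le> ucs" "1 \<le> ues"
    and equiv_cs: "\<And>v. lcs * Nc v \<le> Ns v \<and> Ns v \<le> ucs * Nc v"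
    and equiv_es: "\<And>v. les * Ne v \<le> Ns v \<and> Ns v \<le> ues * Ne v"
    and mu: "\<mu> > 0"
    and alpha2_pos: "1 - \<gamma> * sqrt ((1 + \<mu> / lcs\<^sup>2) / (1 + \<mu> / ucs\<^sup>2)) > 0"
  shows "let \<alpha>\<^sub>1 = (1 + \<mu> / lcs\<^sup>2) / (1 + \<mu> / ucs\<^sup>2);
             \<alpha>\<^sub>2 = 1 - \<gamma> * sqrt \<alpha>\<^sub>1;
             \<alpha>\<^sub>3 = 4 * ucs\<^sup>2 * ues\<^sup>2 * (B + 2) * L * (lcs\<^sup>2 + \<mu>) / (\<mu> * lcs\<^sup>2 * les\<^sup>2);
             \<alpha>\<^sub>4 = \<alpha>\<^sub>3 / (2 * (B + 2))
         in AE \<omega> in M.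
              real_cond_exp M (hist M x w k) (\<lambda>\<omega>. moreau Nc Ns \<mu> (x (Suc k) \<omega> - xstar)) \<omega>
              \<le> (1 - 2 * \<alpha>\<^sub>2 * \<epsilon> k + \<alpha>\<^sub>3 * (\<epsilon> k)\<^sup>2) * moreau Nc Ns \<mu> (x k \<omega> - xstar)
                 + \<alpha>\<^sub>4 * (A + 2 * B * (Nc xstar)\<^sup>2) / (2 * (1 + \<mu> / lcs\<^sup>2)) * (\<epsilon> k)\<^sup>2"
proof -
  note nc = norms(1) and ne = norms(2) and ns = norms(3)
  have me: "menv Nc Ns \<mu> lcs ucs" unfolding menv_def using nc ns mu bnds equiv_cs by auto
  interpret menv Nc Ns \<mu> lcs ucs by (rule me)
  define K where "K = L / (2 * \<mu>)"
  have L0: "L \<ge> 0"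
  proof -
    obtain grad where g: "\<And>a b. (1/2) * (Ns b)\<^sup>2 \<le> (1/2) * (Ns a)\<^sup>2 + grad a \<bullet> (b - a) + L / 2 * (Ns (a - b))\<^sup>2"
      using smooth unfolding L_smooth_def by blast
    define y where "y = (axis undefined 1 :: real^'d)"
    have y0: "y \<noteq> 0" by (simp add: y_def)
    have g1: "(1/2) * (Ns y)\<^sup>2 \<le> (1/2) * (Ns 0)\<^sup>2 + grad 0 \<bullet> (y - 0) + L / 2 * (Ns (0 - y))\<^sup>2"
      by (rule g[where a = 0 and b = y])
    have g2: "(1/2) * (Ns (-y))\<^sup>2 \<le> (1/2) * (Ns 0)\<^sup>2 + grad 0 \<bullet> (-y - 0) + L / 2 * (Ns (0 - -y))\<^sup>2"
      by (rule g[where a = 0 and b = "-y"])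
    have "(Ns y)\<^sup>2 \<le> L * (Ns y)\<^sup>2"
      using g1 g2 isn_minus[OF ns, of y] isn_0[OF ns] by (simp add: inner_minus_right)
    moreover have "Ns y > 0" using y0 isn_zero[OF ns, of y] isn_nonneg[OF ns, of y] by simp
    ultimately have "1 \<le> L" by simp
    then show ?thesis by simp
  qed
  have K0: "K \<ge> 0" using L0 mu by (simp add: K_def)
  define a1 where "a1 = (1 + \<mu> / lcs\<^sup>2) / (1 + \<mu> / ucs\<^sup>2)"
  define c where "c = \<gamma> * sqrt a1"
  have a1pos: "a1 > 0" using mu bnds unfolding a1_def by (intro divide_pos_pos add_pos_nonneg) auto
  have cpos: "c > 0" using gamma a1pos by (simp add: c_def)
  have csq: "c\<^sup>2 = \<gamma>\<^sup>2 * a1" using a1pos by (simp add: c_def power_mult_distrib)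
  have Ncm[measurable]: "Nc \<in> borel_measurable borel" by (rule borel_measurable_continuous_onI[OF isn_cont[OF nc]])
  have Nem[measurable]: "Ne \<in> borel_measurable borel" by (rule borel_measurable_continuous_onI[OF isn_cont[OF ne]])
  have Nsm[measurable]: "Ns \<in> borel_measurable borel" by (rule borel_measurable_continuous_onI[OF isn_cont[OF ns]])
  have Mom[measurable]: "Mo \<in> borel_measurable borel"
    by (rule borel_measurable_continuous_onI[OF convex_on_continuous[OF open_UNIV Mo_convex]])
  have Hm[measurable]: "H \<in> borel_measurable borel"
    by (rule borel_measurable_continuous_onI[OF contr_cont[OF nc contr]]) (use gamma in simp)
  note w_meas[measurable]
  have xm[measurable]: "x n \<in> borel_measurable M" for n
  proof (induction n)
    case 0
    have "x 0 = (\<lambda>\<omega>. x0)" by (rule ext) (simp add: x0)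
    then show ?case by simp
  next
    case (Suc n)
    have [measurable]: "x n \<in> borel_measurable M" by (rule Suc.IH)
    have eq: "x (Suc n) = (\<lambda>\<omega>. x n \<omega> + \<epsilon> n *\<^sub>R (H (x n \<omega>) - x n \<omega> + w n \<omega>))" by (rule ext) (rule rec)
    have "(\<lambda>\<omega>. x n \<omega> + \<epsilon> n *\<^sub>R (H (x n \<omega>) - x n \<omega> + w n \<omega>)) \<in> borel_measurable M" by measurable
    then show ?case using eq by simp
  qed
  have subalg: "subalgebra M (hist M x w n)" for n by (rule hist_subalg[OF xm w_meas])
  have fm: "finite_measure M" using P unfolding prob_space_def by simp
  have sfs: "sigma_finite_subalgebra M (hist M x w n)" for n
    by (rule finite_measure_subalgebra_is_sigma_finite)
       (intro finite_measure_subalgebra.intro finite_measure_subalgebra_axioms.intro fm subalg)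
  interpret P: prob_space M by (rule P)
  have NeNc: "Ne v \<le> (ucs / les) * Nc v" for v
  proof -
    have "les * Ne v \<le> ucs * Nc v" using equiv_es[of v] equiv_cs[of v] by linarith
    then show ?thesis using bnds by (simp add: field_simps)
  qed
  have NeNc2: "(Ne v)\<^sup>2 \<le> (ucs / les)\<^sup>2 * (Nc v)\<^sup>2" for v
    using sq_le_of_le[OF isn_nonneg[OF ne] NeNc[of v]] by (simp add: power_mult_distrib power_divide)
  have NcNe: "Nc v \<le> (ues / lcs) * Ne v" for v
  proof -
    have "lcs * Nc v \<le> ues * Ne v" using equiv_es[of v] equiv_cs[of v] by linarith
    then show ?thesis using bnds by (simp add: field_simps)
  qed
  have NcNe2: "(Nc v)\<^sup>2 \<le> (ues / lcs)\<^sup>2 * (Ne v)\<^sup>2" for v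
    using sq_le_of_le[OF isn_nonneg[OF nc] NcNe[of v]] by (simp add: power_mult_distrib power_divide)
  have I2: "integrable M (\<lambda>\<omega>. (Ne (w n \<omega>))\<^sup>2)" if ix: "integrable M (\<lambda>\<omega>. (Nc (x n \<omega>))\<^sup>2)" for n
  proof -
    interpret S: sigma_finite_subalgebra M "hist M x w n" by (rule sfs)
    have nn: "0 \<le> A + B * (Ne (x n \<omega>))\<^sup>2" for \<omega> using AB by (intro add_nonneg_nonneg mult_nonneg_nonneg) auto
    have ib0: "integrable M (\<lambda>\<omega>. A + B * ((ucs / les)\<^sup>2 * (Nc (x n \<omega>))\<^sup>2))" using ix by simp
    have ib: "integrable M (\<lambda>\<omega>. A + B * (Ne (x n \<omega>))\<^sup>2)"
    proof (rule Bochner_Integration.integrable_bound[OF ib0])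
      show "(\<lambda>\<omega>. A + B * (Ne (x n \<omega>))\<^sup>2) \<in> borel_measurable M" by measurable
      show "AE \<omega> in M. norm (A + B * (Ne (x n \<omega>))\<^sup>2) \<le> norm (A + B * ((ucs / les)\<^sup>2 * (Nc (x n \<omega>))\<^sup>2))"
      proof (intro AE_I2)
        fix \<omega>
        have "B * (Ne (x n \<omega>))\<^sup>2 \<le> B * ((ucs / les)\<^sup>2 * (Nc (x n \<omega>))\<^sup>2)" using AB NeNc2 by (intro mult_left_mono) auto
        moreover have "0 \<le> A + B * ((ucs / les)\<^sup>2 * (Nc (x n \<omega>))\<^sup>2)" using AB by (intro add_nonneg_nonneg mult_nonneg_nonneg) auto
        ultimately show "norm (A + B * (Ne (x n \<omega>))\<^sup>2) \<le> norm (A + B * ((ucs / les)\<^sup>2 * (Nc (x n \<omega>))\<^sup>2))"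
          using nn[of \<omega>] by simp
      qed
    qed
    have "(\<integral>\<^sup>+\<omega>. ennreal ((Ne (w n \<omega>))\<^sup>2) \<partial>M) = (\<integral>\<^sup>+\<omega>. nn_cond_exp M (hist M x w n) (\<lambda>\<omega>. ennreal ((Ne (w n \<omega>))\<^sup>2)) \<omega> \<partial>M)"
      using S.nn_cond_exp_intg[of "\<lambda>_. 1" "\<lambda>\<omega>. ennreal ((Ne (w n \<omega>))\<^sup>2)"] by simp
    also have "\<dots> \<le> (\<integral>\<^sup>+\<omega>. ennreal (A + B * (Ne (x n \<omega>))\<^sup>2) \<partial>M)"
      using w_var[of n] by (intro nn_integral_mono_AE) auto
    also have "\<dots> < \<infinity>" using integrableD(2)[OF ib] by (simp add: less_top)
    finally show ?thesis by (intro integrableI_nonneg) auto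
  qed
  have I1: "integrable M (\<lambda>\<omega>. (Nc (x n \<omega>))\<^sup>2)" for n
  proof (induction n)
    case 0
    have "(\<lambda>\<omega>. (Nc (x 0 \<omega>))\<^sup>2) = (\<lambda>\<omega>. (Nc x0)\<^sup>2)" by (rule ext) (simp add: x0)
    then show ?case by simp
  next
    case (Suc n)
    have iw: "integrable M (\<lambda>\<omega>. (Ne (w n \<omega>))\<^sup>2)" by (rule I2[OF Suc.IH])
    define a' where "a' = \<bar>1 - \<epsilon> n\<bar> + \<epsilon> n * \<gamma>"
    define b' where "b' = \<epsilon> n * (ues / lcs)"
    define c' where "c' = \<epsilon> n * ((1 + \<gamma>) * Nc xstar)"
    have en: "\<epsilon> n > 0" by (rule eps_pos)
    have bnd: "Nc (x (Suc n) \<omega>) \<le> a' * Nc (x n \<omega>) + b' * Ne (w n \<omega>) + c'" for \<omega>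
    proof -
      have eq: "x (Suc n) \<omega> = (1 - \<epsilon> n) *\<^sub>R x n \<omega> + (\<epsilon> n *\<^sub>R H (x n \<omega>) + \<epsilon> n *\<^sub>R w n \<omega>)"
        by (simp add: rec algebra_simps)
      have "Nc (x (Suc n) \<omega>) \<le> Nc ((1 - \<epsilon> n) *\<^sub>R x n \<omega>) + (Nc (\<epsilon> n *\<^sub>R H (x n \<omega>)) + Nc (\<epsilon> n *\<^sub>R w n \<omega>))"
        unfolding eq by (meson add_left_mono isn_tri[OF nc] order_trans)
      also have "\<dots> = \<bar>1 - \<epsilon> n\<bar> * Nc (x n \<omega>) + \<epsilon> n * Nc (H (x n \<omega>)) + \<epsilon> n * Nc (w n \<omega>)"
        using en by (simp add: isn_scale[OF nc])
      also have "Nc (H (x n \<omega>)) \<le> \<gamma> * Nc (x n \<omega>) + (1 + \<gamma>) * Nc xstar"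
      proof -
        have "Nc (H (x n \<omega>)) = Nc ((H (x n \<omega>) - H xstar) + xstar)" using fixpt by simp
        also have "\<dots> \<le> Nc (H (x n \<omega>) - H xstar) + Nc xstar" by (rule isn_tri[OF nc])
        also have "\<dots> \<le> \<gamma> * Nc (x n \<omega> - xstar) + Nc xstar" using contr by simp
        also have "\<gamma> * Nc (x n \<omega> - xstar) \<le> \<gamma> * (Nc (x n \<omega>) + Nc xstar)"
          using gamma isn_diff[OF nc] by (intro mult_left_mono) auto
        finally show ?thesis by (simp add: algebra_simps)
      qed
      also have "Nc (w n \<omega>) \<le> (ues / lcs) * Ne (w n \<omega>)" by (rule NcNe)
      finally show ?thesis using en
        by (simp add: a'_def b'_def c'_def algebra_simps)
    qed
    have ib: "integrable M (\<lambda>\<omega>. 4 * a'\<^sup>2 * (Nc (x n \<omega>))\<^sup>2 + 4 * b'\<^sup>2 * (Ne (w n \<omega>))\<^sup>2 + 2 * c'\<^sup>2)"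
      using Suc.IH iw by simp
    show ?case
    proof (rule Bochner_Integration.integrable_bound[OF ib])
      show "(\<lambda>\<omega>. (Nc (x (Suc n) \<omega>))\<^sup>2) \<in> borel_measurable M" by measurable
      show "AE \<omega> in M. norm ((Nc (x (Suc n) \<omega>))\<^sup>2) \<le> norm (4 * a'\<^sup>2 * (Nc (x n \<omega>))\<^sup>2 + 4 * b'\<^sup>2 * (Ne (w n \<omega>))\<^sup>2 + 2 * c'\<^sup>2)"
      proof (intro AE_I2)
        fix \<omega>
        have "(Nc (x (Suc n) \<omega>))\<^sup>2 \<le> (a' * Nc (x n \<omega>) + b' * Ne (w n \<omega>) + c')\<^sup>2"
          using bnd[of \<omega>] isn_nonneg[OF nc] by (intro sq_le_of_le) auto
        also have "\<dots> \<le> 2 * (a' * Nc (x n \<omega>) + b' * Ne (w n \<omega>))\<^sup>2 + 2 * c'\<^sup>2" by (rule sq_sum_le)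
        also have "(a' * Nc (x n \<omega>) + b' * Ne (w n \<omega>))\<^sup>2 \<le> 2 * (a' * Nc (x n \<omega>))\<^sup>2 + 2 * (b' * Ne (w n \<omega>))\<^sup>2" by (rule sq_sum_le)
        finally have "(Nc (x (Suc n) \<omega>))\<^sup>2 \<le> 4 * a'\<^sup>2 * (Nc (x n \<omega>))\<^sup>2 + 4 * b'\<^sup>2 * (Ne (w n \<omega>))\<^sup>2 + 2 * c'\<^sup>2"
          by (simp add: power_mult_distrib)
        then show "norm ((Nc (x (Suc n) \<omega>))\<^sup>2) \<le> norm (4 * a'\<^sup>2 * (Nc (x n \<omega>))\<^sup>2 + 4 * b'\<^sup>2 * (Ne (w n \<omega>))\<^sup>2 + 2 * c'\<^sup>2)"
          by simp
      qed
    qed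
  qed
  obtain mc where mc: "mc > 0" "\<And>u. mc * norm u \<le> Nc u" using isn_lower[OF nc] by blast
  define F where "F = hist M x w k"
  interpret S: sigma_finite_subalgebra M F unfolding F_def by (rule sfs)
  define e where "e = \<epsilon> k"
  have e: "e > 0" unfolding e_def by (rule eps_pos)
  define X where "X = (\<lambda>\<omega>. x k \<omega> - xstar)"
  define Y where "Y = (\<lambda>\<omega>. x (Suc k) \<omega> - xstar)"
  define V where "V = (\<lambda>\<omega>. dvec Mo (X \<omega>))"
  define T where "T = (\<lambda>\<omega>. \<Sum>i\<in>UNIV. V \<omega> $ i * w k \<omega> $ i)"
  define Q where "Q = (\<lambda>\<omega>. (Ne (w k \<omega>))\<^sup>2)"
  define a2 where "a2 = 1 - c"
  define G where "G = (\<lambda>\<omega>. (1 - 2 * a2 * e) * Mo (X \<omega>) + 8 * K * e\<^sup>2 * ucs\<^sup>2 * (Nc (X \<omega>))\<^sup>2)"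
  define c2 where "c2 = 2 * K * e\<^sup>2 * ues\<^sup>2"
  define Rf where "Rf = (\<lambda>\<omega>. G \<omega> + (e * T \<omega> + c2 * Q \<omega>))"
  have xkF[measurable]: "x k \<in> borel_measurable F" unfolding F_def by (rule hist_meas) simp
  have XF[measurable]: "X \<in> borel_measurable F" unfolding X_def by measurable
  have XM[measurable]: "X \<in> borel_measurable M" unfolding X_def by measurable
  have YM[measurable]: "Y \<in> borel_measurable M" unfolding Y_def by measurable
  have dm: "(\<lambda>z. dvec Mo z $ i) \<in> borel_measurable borel" for i by (rule dvec_meas[OF me smooth])
  have VF[measurable]: "(\<lambda>\<omega>. V \<omega> $ i) \<in> borel_measurable F" for i
    unfolding V_def by (rule measurable_compose[OF XF dm])
  have VM[measurable]: "(\<lambda>\<omega>. V \<omega> $ i) \<in> borel_measurable M" for i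
    unfolding V_def by (rule measurable_compose[OF XM dm])
  have MoXF[measurable]: "(\<lambda>\<omega>. Mo (X \<omega>)) \<in> borel_measurable F" by (rule measurable_compose[OF XF Mom])
  have MoXM[measurable]: "(\<lambda>\<omega>. Mo (X \<omega>)) \<in> borel_measurable M" by (rule measurable_compose[OF XM Mom])
  have MoYM[measurable]: "(\<lambda>\<omega>. Mo (Y \<omega>)) \<in> borel_measurable M" by (rule measurable_compose[OF YM Mom])
  have NcXF[measurable]: "(\<lambda>\<omega>. Nc (X \<omega>)) \<in> borel_measurable F" by (rule measurable_compose[OF XF Ncm])
  have NcXM[measurable]: "(\<lambda>\<omega>. Nc (X \<omega>)) \<in> borel_measurable M" by (rule measurable_compose[OF XM Ncm])
  have GF[measurable]: "G \<in> borel_measurable F" unfolding G_def by measurable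
  have GM[measurable]: "G \<in> borel_measurable M" unfolding G_def by measurable
  have nthm: "(\<lambda>v::real^'d. v $ i) \<in> borel_measurable borel" for i
    by (rule borel_measurable_continuous_onI[OF linear_continuous_on[OF bounded_linear_vec_nth]])
  have wkM[measurable]: "(\<lambda>\<omega>. w k \<omega> $ i) \<in> borel_measurable M" for i
    by (rule measurable_compose[OF w_meas nthm])
  have QM[measurable]: "Q \<in> borel_measurable M" unfolding Q_def by measurable
  have TM[measurable]: "T \<in> borel_measurable M" unfolding T_def by measurable
  have sq2: "integrable M (\<lambda>\<omega>. (Nc (Z \<omega>))\<^sup>2)" if iz: "integrable M (\<lambda>\<omega>. (Nc (z \<omega>))\<^sup>2)"
     and zm: "z \<in> borel_measurable M" and Zd: "Z = (\<lambda>\<omega>. z \<omega> - xstar)" for z Z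
  proof -
    have [measurable]: "z \<in> borel_measurable M" by (rule zm)
    have ib: "integrable M (\<lambda>\<omega>. 2 * (Nc (z \<omega>))\<^sup>2 + 2 * (Nc xstar)\<^sup>2)" using iz by simp
    show ?thesis
    proof (rule Bochner_Integration.integrable_bound[OF ib])
      show "(\<lambda>\<omega>. (Nc (Z \<omega>))\<^sup>2) \<in> borel_measurable M" unfolding Zd by measurable
      show "AE \<omega> in M. norm ((Nc (Z \<omega>))\<^sup>2) \<le> norm (2 * (Nc (z \<omega>))\<^sup>2 + 2 * (Nc xstar)\<^sup>2)"
      proof (intro AE_I2)
        fix \<omega>
        have "(Nc (Z \<omega>))\<^sup>2 \<le> (Nc (z \<omega>) + Nc xstar)\<^sup>2"
          unfolding Zd using isn_diff[OF nc] isn_nonneg[OF nc] by (intro sq_le_of_le) auto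
        also have "\<dots> \<le> 2 * (Nc (z \<omega>))\<^sup>2 + 2 * (Nc xstar)\<^sup>2" by (rule sq_sum_le)
        finally show "norm ((Nc (Z \<omega>))\<^sup>2) \<le> norm (2 * (Nc (z \<omega>))\<^sup>2 + 2 * (Nc xstar)\<^sup>2)" by simp
      qed
    qed
  qed
  have iX2: "integrable M (\<lambda>\<omega>. (Nc (X \<omega>))\<^sup>2)" by (rule sq2[OF I1 xm X_def])
  have iY2: "integrable M (\<lambda>\<omega>. (Nc (Y \<omega>))\<^sup>2)" by (rule sq2[OF I1 xm Y_def])
  have Mo_le_sq: "Mo z \<le> (Nc z)\<^sup>2" for z
  proof -
    have den: "1 + \<mu> / ucs\<^sup>2 \<ge> 1" using mu bnds by simp
    have "Mo z \<le> (1/2) * (Nc z)\<^sup>2 / (1 + \<mu> / ucs\<^sup>2)" by (rule Mo_upper)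
    also have "\<dots> \<le> (1/2) * (Nc z)\<^sup>2" using divide_left_mono[OF den, of "(1/2) * (Nc z)\<^sup>2"] den by simp
    finally show ?thesis using Mo_nonneg[of z] by simp
  qed
  have iMo: "integrable M (\<lambda>\<omega>. Mo (Z \<omega>))" if iz: "integrable M (\<lambda>\<omega>. (Nc (Z \<omega>))\<^sup>2)"
     and zm: "(\<lambda>\<omega>. Mo (Z \<omega>)) \<in> borel_measurable M" for Z
  proof (rule Bochner_Integration.integrable_bound[OF iz zm])
    show "AE \<omega> in M. norm (Mo (Z \<omega>)) \<le> norm ((Nc (Z \<omega>))\<^sup>2)"
      using Mo_le_sq Mo_nonneg by (intro AE_I2) simp
  qed
  have iMoX: "integrable M (\<lambda>\<omega>. Mo (X \<omega>))" by (rule iMo[OF iX2 MoXM])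
  have iMoY: "integrable M (\<lambda>\<omega>. Mo (Y \<omega>))" by (rule iMo[OF iY2 MoYM])
  have iQ: "integrable M Q" unfolding Q_def by (rule I2[OF I1])
  have iW: "integrable M (\<lambda>\<omega>. w k \<omega> $ i)" for i
    by (rule integrable_bounded_linear[OF bounded_linear_vec_nth w_int])
  have iG: "integrable M G" unfolding G_def using iMoX iX2 by simp
  have iTi: "integrable M (\<lambda>\<omega>. V \<omega> $ i * w k \<omega> $ i)" for i
  proof -
    define Ci where "Ci = (1/2) * (1 + Nc (axis i 1))\<^sup>2"
    define Cw where "Cw = ues / (lcs * mc)"
    have Ci: "Ci \<ge> 0" by (simp add: Ci_def)
    have Cw: "Cw \<ge> 0" using bnds mc by (simp add: Cw_def)
    have ib: "integrable M (\<lambda>\<omega>. Ci * Cw * ((Nc (X \<omega>))\<^sup>2 + 1 + Q \<omega>))" using iX2 iQ by simp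
    show ?thesis
    proof (rule Bochner_Integration.integrable_bound[OF ib])
      show "(\<lambda>\<omega>. V \<omega> $ i * w k \<omega> $ i) \<in> borel_measurable M" by measurable
      show "AE \<omega> in M. norm (V \<omega> $ i * w k \<omega> $ i) \<le> norm (Ci * Cw * ((Nc (X \<omega>))\<^sup>2 + 1 + Q \<omega>))"
      proof (intro AE_I2)
        fix \<omega>
        define a where "a = Nc (X \<omega>) + 1"
        define b where "b = Ne (w k \<omega>)"
        have a: "a \<ge> 0" using isn_nonneg[OF nc] by (simp add: a_def)
        have b: "b \<ge> 0" using isn_nonneg[OF ne] by (simp add: b_def)
        have v: "\<bar>V \<omega> $ i\<bar> \<le> Ci * a" unfolding V_def Ci_def a_def by (rule dvec_bound[OF me smooth])
        have "\<bar>w k \<omega> $ i\<bar> \<le> norm (w k \<omega>)" by (rule component_le_norm_cart)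
        also have "\<dots> \<le> Nc (w k \<omega>) / mc" using mc(2)[of "w k \<omega>"] mc(1) by (simp add: field_simps)
        also have "\<dots> \<le> ((ues / lcs) * Ne (w k \<omega>)) / mc" by (rule divide_right_mono[OF NcNe]) (use mc in simp)
        also have "\<dots> = Cw * b" by (simp add: Cw_def b_def)
        finally have wb: "\<bar>w k \<omega> $ i\<bar> \<le> Cw * b" .
        have "\<bar>V \<omega> $ i * w k \<omega> $ i\<bar> \<le> (Ci * a) * (Cw * b)"
          unfolding abs_mult by (intro mult_mono v wb) (use Ci a in auto)
        also have "\<dots> = Ci * Cw * (a * b)" by (simp add: algebra_simps)
        also have "a * b \<le> (Nc (X \<omega>))\<^sup>2 + 1 + Q \<omega>"
        proof -
          have "a * b \<le> (a\<^sup>2 + b\<^sup>2) / 2"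
          proof -
            have "0 \<le> (a - b)\<^sup>2" by simp
            then show ?thesis by (simp add: power2_eq_square algebra_simps)
          qed
          also have "a\<^sup>2 \<le> 2 * (Nc (X \<omega>))\<^sup>2 + 2 * 1\<^sup>2" unfolding a_def by (rule sq_sum_le)
          finally have h: "a * b \<le> (2 * (Nc (X \<omega>))\<^sup>2 + 2 + b\<^sup>2) / 2" by simp
          have h2: "2 * (a * b) \<le> 2 * (Nc (X \<omega>))\<^sup>2 + 2 + b\<^sup>2" using h by (simp add: field_simps)
          show ?thesis unfolding Q_def b_def[symmetric] using h2 zero_le_power2[of b] by linarith
        qed
        finally have "\<bar>V \<omega> $ i * w k \<omega> $ i\<bar> \<le> Ci * Cw * ((Nc (X \<omega>))\<^sup>2 + 1 + Q \<omega>)"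
          using Ci Cw by (simp add: mult_left_mono)
        then show "norm (V \<omega> $ i * w k \<omega> $ i) \<le> norm (Ci * Cw * ((Nc (X \<omega>))\<^sup>2 + 1 + Q \<omega>))" by simp
      qed
    qed
  qed
  have iT: "integrable M T" unfolding T_def by (rule Bochner_Integration.integrable_sum) (rule iTi)
  have iRf: "integrable M Rf" unfolding Rf_def using iG iT iQ by simp
  have d1: "1 + \<mu> / ucs\<^sup>2 > 0" using mu bnds by (intro add_pos_nonneg) auto
  have d2: "1 + \<mu> / lcs\<^sup>2 > 0" using mu bnds by (intro add_pos_nonneg) auto
  have PW: "Mo (Y \<omega>) \<le> Rf \<omega>" for \<omega>
  proof -
    define z where "z = X \<omega>"
    define W where "W = w k \<omega>"
    define hs where "hs = H (x k \<omega>) - xstar"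
    define Z where "Z = hs - z"
    define v where "v = V \<omega>"
    have Yz: "Y \<omega> - z = e *\<^sub>R (Z + W)"
      by (simp add: Y_def z_def X_def Z_def hs_def W_def e_def rec algebra_simps)
    have up: "Mo (Y \<omega>) \<le> Mo z + v \<bullet> (Y \<omega> - z) + K * (Ns (Y \<omega> - z))\<^sup>2"
      unfolding v_def V_def z_def K_def by (rule dvec_props(1)[OF me smooth])
    have sub: "\<And>y. Mo z + v \<bullet> (y - z) \<le> Mo y"
      unfolding v_def V_def z_def by (rule dvec_props(2)[OF me smooth])
    have eu: "v \<bullet> z = 2 * Mo z" by (rule euler_sub[OF sub Mo_scale Mo_nonneg])
    have Nhs: "Nc hs \<le> \<gamma> * Nc z" unfolding hs_def z_def X_def using contr[of "x k \<omega>" xstar] fixpt by simp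
    have Mhs: "Mo hs \<le> c\<^sup>2 * Mo z"
    proof -
      have sq: "(Nc hs)\<^sup>2 \<le> (\<gamma> * Nc z)\<^sup>2" using Nhs isn_nonneg[OF nc] by (intro sq_le_of_le) auto
      have "Mo hs \<le> (1/2) * (Nc hs)\<^sup>2 / (1 + \<mu> / ucs\<^sup>2)" by (rule Mo_upper)
      also have "\<dots> \<le> (1/2) * (\<gamma> * Nc z)\<^sup>2 / (1 + \<mu> / ucs\<^sup>2)"
        using sq d1 by (intro divide_right_mono mult_left_mono) auto
      also have "\<dots> = \<gamma>\<^sup>2 * a1 * ((1/2) * (Nc z)\<^sup>2 / (1 + \<mu> / lcs\<^sup>2))"
        unfolding a1_def by (rule alg4) (use d1 d2 in auto)
      also have "\<dots> \<le> \<gamma>\<^sup>2 * a1 * Mo z" using a1pos by (intro mult_left_mono Mo_lower) auto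
      finally show ?thesis using csq by simp
    qed
    have du: "v \<bullet> hs \<le> 2 * c * Mo z" by (rule dual_sub[OF sub Mo_scale eu Mhs cpos])
    have vZ: "v \<bullet> Z \<le> -2 * a2 * Mo z" using du eu by (simp add: Z_def inner_diff_right a2_def algebra_simps)
    have vW: "v \<bullet> W = T \<omega>" by (simp add: T_def v_def W_def inner_vec_def)
    have NZ: "Nc Z \<le> 2 * Nc z"
    proof -
      have "Nc Z \<le> Nc hs + Nc z" unfolding Z_def by (rule isn_diff[OF nc])
      also have "\<dots> \<le> \<gamma> * Nc z + Nc z" using Nhs by simp
      also have "\<dots> \<le> 2 * Nc z" using gamma isn_nonneg[OF nc, of z] mult_left_le_one_le[of "Nc z" \<gamma>] by simp
      finally show ?thesis .
    qed
    have NsZ: "(Ns Z)\<^sup>2 \<le> 4 * ucs\<^sup>2 * (Nc z)\<^sup>2"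
    proof -
      have "Ns Z \<le> ucs * Nc Z" using equiv_cs by blast
      also have "\<dots> \<le> ucs * (2 * Nc z)" using NZ bnds by (intro mult_left_mono) auto
      finally have "(Ns Z)\<^sup>2 \<le> (ucs * (2 * Nc z))\<^sup>2" using isn_nonneg[OF ns] by (intro sq_le_of_le) auto
      then show ?thesis by (simp add: power_mult_distrib)
    qed
    have NsW: "(Ns W)\<^sup>2 \<le> ues\<^sup>2 * (Ne W)\<^sup>2"
    proof -
      have "Ns W \<le> ues * Ne W" using equiv_es by blast
      then have "(Ns W)\<^sup>2 \<le> (ues * Ne W)\<^sup>2" using isn_nonneg[OF ns] by (intro sq_le_of_le) auto
      then show ?thesis by (simp add: power_mult_distrib)
    qed
    have NsZW: "(Ns (Z + W))\<^sup>2 \<le> 2 * (Ns Z)\<^sup>2 + 2 * (Ns W)\<^sup>2"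
    proof -
      have "(Ns (Z + W))\<^sup>2 \<le> (Ns Z + Ns W)\<^sup>2" using isn_tri[OF ns] isn_nonneg[OF ns] by (intro sq_le_of_le) auto
      also have "\<dots> \<le> 2 * (Ns Z)\<^sup>2 + 2 * (Ns W)\<^sup>2" by (rule sq_sum_le)
      finally show ?thesis .
    qed
    have NsZW2: "(Ns (Z + W))\<^sup>2 \<le> 8 * ucs\<^sup>2 * (Nc z)\<^sup>2 + 2 * ues\<^sup>2 * (Ne W)\<^sup>2"
      using NsZW NsZ NsW by linarith
    have Ns_eq: "(Ns (e *\<^sub>R (Z + W)))\<^sup>2 = e\<^sup>2 * (Ns (Z + W))\<^sup>2"
      using e by (simp add: isn_scale[OF ns] power_mult_distrib)
    have t1: "e * (v \<bullet> Z) \<le> e * (-2 * a2 * Mo z)" using mult_left_mono[OF vZ, of e] e by simp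
    have t2: "K * e\<^sup>2 * (Ns (Z + W))\<^sup>2 \<le> K * e\<^sup>2 * (8 * ucs\<^sup>2 * (Nc z)\<^sup>2 + 2 * ues\<^sup>2 * (Ne W)\<^sup>2)"
      using NsZW2 K0 by (intro mult_left_mono) auto
    have "Mo (Y \<omega>) \<le> Mo z + v \<bullet> (e *\<^sub>R (Z + W)) + K * (e\<^sup>2 * (Ns (Z + W))\<^sup>2)"
      using up unfolding Yz Ns_eq .
    also have "\<dots> = Mo z + e * (v \<bullet> Z) + e * T \<omega> + K * e\<^sup>2 * (Ns (Z + W))\<^sup>2"
      using vW by (simp add: inner_add_right algebra_simps)
    also have "\<dots> \<le> Mo z + e * (-2 * a2 * Mo z) + e * T \<omega> + K * e\<^sup>2 * (8 * ucs\<^sup>2 * (Nc z)\<^sup>2 + 2 * ues\<^sup>2 * (Ne W)\<^sup>2)"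
      by (intro add_mono order_refl t1 t2)
    also have "\<dots> = Rf \<omega>" by (simp add: Rf_def G_def c2_def Q_def z_def W_def algebra_simps)
    finally show ?thesis .
  qed
  have AE1: "AE \<omega> in M. real_cond_exp M F (\<lambda>\<omega>. Mo (Y \<omega>)) \<omega> \<le> real_cond_exp M F Rf \<omega>"
    using PW by (intro S.real_cond_exp_mono iMoY iRf AE_I2) auto
  have AE2: "AE \<omega> in M. real_cond_exp M F Rf \<omega> = real_cond_exp M F G \<omega> + real_cond_exp M F (\<lambda>\<omega>. e * T \<omega> + c2 * Q \<omega>) \<omega>"
    unfolding Rf_def by (rule S.real_cond_exp_add[OF iG]) (use iT iQ in simp)
  have AE3: "AE \<omega> in M. real_cond_exp M F (\<lambda>\<omega>. e * T \<omega> + c2 * Q \<omega>) \<omega> = real_cond_exp M F (\<lambda>\<omega>. e * T \<omega>) \<omega> + real_cond_exp M F (\<lambda>\<omega>. c2 * Q \<omega>) \<omega>"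
    by (rule S.real_cond_exp_add) (use iT iQ in simp_all)
  have AE4: "AE \<omega> in M. real_cond_exp M F (\<lambda>\<omega>. e * T \<omega>) \<omega> = e * real_cond_exp M F T \<omega>"
    by (rule S.real_cond_exp_cmult[OF iT])
  have AE5: "AE \<omega> in M. real_cond_exp M F (\<lambda>\<omega>. c2 * Q \<omega>) \<omega> = c2 * real_cond_exp M F Q \<omega>"
    by (rule S.real_cond_exp_cmult[OF iQ])
  have AE6: "AE \<omega> in M. real_cond_exp M F G \<omega> = G \<omega>" by (rule S.real_cond_exp_F_meas[OF iG GF])
  have AE7: "AE \<omega> in M. real_cond_exp M F T \<omega> = (\<Sum>i\<in>UNIV. real_cond_exp M F (\<lambda>\<omega>. V \<omega> $ i * w k \<omega> $ i) \<omega>)"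
    unfolding T_def by (rule S.real_cond_exp_sum) (rule iTi)
  have AE8: "AE \<omega> in M. \<forall>i\<in>UNIV. real_cond_exp M F (\<lambda>\<omega>. V \<omega> $ i * w k \<omega> $ i) \<omega> = V \<omega> $ i * real_cond_exp M F (\<lambda>\<omega>. w k \<omega> $ i) \<omega>"
  proof (rule AE_finite_allI)
    fix i :: 'd
    show "AE \<omega> in M. real_cond_exp M F (\<lambda>\<omega>. V \<omega> $ i * w k \<omega> $ i) \<omega> = V \<omega> $ i * real_cond_exp M F (\<lambda>\<omega>. w k \<omega> $ i) \<omega>"
      by (rule S.real_cond_exp_mult[OF VF wkM iTi])
  qed simp
  have AE9: "AE \<omega> in M. \<forall>i\<in>UNIV. real_cond_exp M F (\<lambda>\<omega>. w k \<omega> $ i) \<omega> = 0"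
  proof (rule AE_finite_allI)
    fix i :: 'd
    show "AE \<omega> in M. real_cond_exp M F (\<lambda>\<omega>. w k \<omega> $ i) \<omega> = 0" unfolding F_def by (rule w_mean)
  qed simp
  have Qnn: "(\<lambda>\<omega>. ennreal (- Q \<omega>)) = (\<lambda>\<omega>. 0)" by (rule ext) (simp add: Q_def ennreal_neg)
  have AEn: "AE \<omega> in M. nn_cond_exp M F (\<lambda>\<omega>. ennreal (- Q \<omega>)) \<omega> = 0"
    using S.nn_cond_exp_F_meas[of "\<lambda>_. 0"] unfolding Qnn by auto
  have AEv: "AE \<omega> in M. nn_cond_exp M F (\<lambda>\<omega>. ennreal (Q \<omega>)) \<omega> \<le> ennreal (A + B * (Ne (x k \<omega>))\<^sup>2)"
    using w_var[of k] unfolding F_def Q_def .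
  have AE10: "AE \<omega> in M. real_cond_exp M F Q \<omega> \<le> A + B * (Ne (x k \<omega>))\<^sup>2"
    using AEn AEv
  proof eventually_elim
    case (elim \<omega>)
    have nn: "0 \<le> A + B * (Ne (x k \<omega>))\<^sup>2" using AB by (intro add_nonneg_nonneg mult_nonneg_nonneg) auto
    have "enn2real (nn_cond_exp M F (\<lambda>\<omega>. ennreal (Q \<omega>)) \<omega>) \<le> enn2real (ennreal (A + B * (Ne (x k \<omega>))\<^sup>2))"
      using elim(2) by (intro enn2real_mono) auto
    then show ?case using elim(1) nn unfolding real_cond_exp_def by simp
  qed
  have c2nn: "c2 \<ge> 0" using K0 by (simp add: c2_def)
  have AEfin: "AE \<omega> in M. real_cond_exp M F (\<lambda>\<omega>. Mo (Y \<omega>)) \<omega> \<le> G \<omega> + c2 * (A + B * (Ne (x k \<omega>))\<^sup>2)"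
    using AE1 AE2 AE3 AE4 AE5 AE6 AE7 AE8 AE9 AE10
  proof eventually_elim
    case (elim \<omega>)
    have "real_cond_exp M F T \<omega> = 0" using elim(7,8,9) by simp
    then have "real_cond_exp M F (\<lambda>\<omega>. Mo (Y \<omega>)) \<omega> \<le> G \<omega> + c2 * real_cond_exp M F Q \<omega>"
      using elim(1-6) by simp
    also have "c2 * real_cond_exp M F Q \<omega> \<le> c2 * (A + B * (Ne (x k \<omega>))\<^sup>2)"
      using elim(10) c2nn by (intro mult_left_mono) auto
    finally show ?case by simp
  qed
  have ptw: "G \<omega> + c2 * (A + B * (Ne (x k \<omega>))\<^sup>2)
     \<le> (1 - 2 * a2 * e + (4 * ucs\<^sup>2 * ues\<^sup>2 * (B + 2) * L * (lcs\<^sup>2 + \<mu>) / (\<mu> * lcs\<^sup>2 * les\<^sup>2)) * e\<^sup>2) * Mo (X \<omega>)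
        + (4 * ucs\<^sup>2 * ues\<^sup>2 * (B + 2) * L * (lcs\<^sup>2 + \<mu>) / (\<mu> * lcs\<^sup>2 * les\<^sup>2)) / (2 * (B + 2))
          * (A + 2 * B * (Nc xstar)\<^sup>2) / (2 * (1 + \<mu> / lcs\<^sup>2)) * e\<^sup>2" for \<omega>
  proof -
    have nzl: "(Nc (X \<omega>))\<^sup>2 \<le> 2 * (1 + \<mu> / lcs\<^sup>2) * Mo (X \<omega>)"
    proof -
      have "(1/2) * (Nc (X \<omega>))\<^sup>2 / (1 + \<mu> / lcs\<^sup>2) \<le> Mo (X \<omega>)" by (rule Mo_lower)
      then show ?thesis using alg5[OF _ d2] by blast
    qed
    have q: "(Ne (x k \<omega>))\<^sup>2 \<le> 2 * (ucs\<^sup>2 / les\<^sup>2) * (Nc (X \<omega>))\<^sup>2 + 2 * (ucs\<^sup>2 / les\<^sup>2) * (Nc xstar)\<^sup>2"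
    proof -
      have h1: "(Ne (x k \<omega>))\<^sup>2 \<le> (ucs / les)\<^sup>2 * (Nc (x k \<omega>))\<^sup>2" by (rule NeNc2)
      have h2: "(Nc (x k \<omega>))\<^sup>2 \<le> 2 * (Nc (X \<omega>))\<^sup>2 + 2 * (Nc xstar)\<^sup>2"
      proof -
        have "x k \<omega> = X \<omega> + xstar" by (simp add: X_def)
        then have "Nc (x k \<omega>) \<le> Nc (X \<omega>) + Nc xstar" using isn_tri[OF nc] by metis
        then have "(Nc (x k \<omega>))\<^sup>2 \<le> (Nc (X \<omega>) + Nc xstar)\<^sup>2" using isn_nonneg[OF nc] by (intro sq_le_of_le) auto
        also have "\<dots> \<le> 2 * (Nc (X \<omega>))\<^sup>2 + 2 * (Nc xstar)\<^sup>2" by (rule sq_sum_le)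
        finally show ?thesis .
      qed
      have "(ucs / les)\<^sup>2 * (Nc (x k \<omega>))\<^sup>2 \<le> (ucs / les)\<^sup>2 * (2 * (Nc (X \<omega>))\<^sup>2 + 2 * (Nc xstar)\<^sup>2)"
        by (rule mult_left_mono[OF h2]) simp
      with h1 have "(Ne (x k \<omega>))\<^sup>2 \<le> (ucs / les)\<^sup>2 * (2 * (Nc (X \<omega>))\<^sup>2 + 2 * (Nc xstar)\<^sup>2)" by linarith
      then show ?thesis by (simp add: power_divide algebra_simps)
    qed
    have "G \<omega> + c2 * (A + B * (Ne (x k \<omega>))\<^sup>2) = (1 - 2 * a2 * e) * Mo (X \<omega>) + 8 * K * e\<^sup>2 * ucs\<^sup>2 * (Nc (X \<omega>))\<^sup>2
        + 2 * K * e\<^sup>2 * ues\<^sup>2 * (A + B * (Ne (x k \<omega>))\<^sup>2)" by (simp add: G_def c2_def)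
    also have "\<dots> \<le> (1 - 2 * a2 * e + (4 * ucs\<^sup>2 * ues\<^sup>2 * (B + 2) * L * (lcs\<^sup>2 + \<mu>) / (\<mu> * lcs\<^sup>2 * les\<^sup>2)) * e\<^sup>2) * Mo (X \<omega>)
        + (4 * ucs\<^sup>2 * ues\<^sup>2 * (B + 2) * L * (lcs\<^sup>2 + \<mu>) / (\<mu> * lcs\<^sup>2 * les\<^sup>2)) / (2 * (B + 2))
          * (A + 2 * B * (Nc xstar)\<^sup>2) / (2 * (1 + \<mu> / lcs\<^sup>2)) * e\<^sup>2"
      by (rule final_alg[OF Mo_nonneg _ nzl q _ K_def L0 e AB bnds(1) bnds(3) bnds(4) bnds(5) bnds(6) mu]) auto
    finally show ?thesis .
  qed
  have AEres: "AE \<omega> in M. real_cond_exp M F (\<lambda>\<omega>. Mo (Y \<omega>)) \<omega>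
     \<le> (1 - 2 * a2 * e + (4 * ucs\<^sup>2 * ues\<^sup>2 * (B + 2) * L * (lcs\<^sup>2 + \<mu>) / (\<mu> * lcs\<^sup>2 * les\<^sup>2)) * e\<^sup>2) * Mo (X \<omega>)
        + (4 * ucs\<^sup>2 * ues\<^sup>2 * (B + 2) * L * (lcs\<^sup>2 + \<mu>) / (\<mu> * lcs\<^sup>2 * les\<^sup>2)) / (2 * (B + 2))
          * (A + 2 * B * (Nc xstar)\<^sup>2) / (2 * (1 + \<mu> / lcs\<^sup>2)) * e\<^sup>2"
    using AEfin by eventually_elim (use ptw in \<open>blast intro: order_trans\<close>)
  show ?thesis unfolding Let_def using AEres
    by (simp add: F_def Y_def X_def a2_def c_def a1_def e_def)
qed

end
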